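(* For $|q|<1$, \[ \sum_{i,j\geq 0}\frac{q^{\frac{i(3i-1)}{2}+4ij+4j^2}}{(q;q)_i (q^2;q^2)_j} =\frac{1}{(q,q^4;q^5)_\infty},\qquad \sum_{i,j\geq 0}\frac{q^{\frac{i(3i+1)}{2}+4ij+4j^2+2j}}{(q;q)_i(q^2;q^2)_j}=\frac{1}{(q^2,q^3;q^5)_\infty}. \]
   Context: For $|q|<1$: $(a;q)_0=1$, $(a;q)_n=\prod_{k=0}^{n-1}(1-aq^k)$, $(a;q)_\infty=\prod_{k\ge0}(1-aq^k)$, $(a_1,\dots,a_m;q)_n=\prod_\ell(a_\ell;q)_n$. *)

theory Defs
  imports "HOL-Analysis.Analysis"
begin

definition qpoch :: "complex \<Rightarrow> complex \<Rightarrow> nat \<Rightarrow> complex" where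
  "qpoch a q n = (\<Prod>k<n. 1 - a * q ^ k)"

definition qpoch_inf :: "complex \<Rightarrow> complex \<Rightarrow> complex" where
  "qpoch_inf a q = (\<Prod>k. 1 - a * q ^ k)"

end

theory Submission
  imports Defs "HOL-Computational_Algebra.Formal_Power_Series"
begin

lemma qpoch_0[simp]: "qpoch a q 0 = 1" by (simp add: qpoch_def)
lemma qpoch_Suc: "qpoch a q (Suc n) = qpoch a q n * (1 - a*q^n)" by (simp add: qpoch_def)
lemma qpoch_add: "qpoch a q (m+n) = qpoch a q m * qpoch (a*q^m) q n"
  by (induction n) (auto simp: qpoch_Suc power_add mult_ac)
lemma qpoch_Suc': "qpoch a q (Suc n) = (1 - a) * qpoch (a*q) q n"
  using qpoch_add[of a q 1 n] by (simp add: qpoch_def)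

lemma qpoch_conv: fixes a q :: complex assumes "norm q < 1" shows "convergent_prod (\<lambda>k. 1 - a*q^k)"
proof -
  have "summable (\<lambda>k. norm q ^ k)" by (rule summable_geometric) (simp add: assms)
  from summable_mult[OF this, of "norm a"] have "summable (\<lambda>k. norm a * norm q ^ k)" .
  then have "summable (\<lambda>k. norm (a*q^k))"
    unfolding norm_mult norm_power .
  then have "summable (\<lambda>k. norm ((1 - a*q^k) - 1))"
    by (simp add: norm_minus_commute)
  then show ?thesis
    by (intro abs_convergent_prod_imp_convergent_prod summable_imp_abs_convergent_prod)
qed

lemma qpoch_inf_has_prod: "norm (q::complex) < 1 \<Longrightarrow> (\<lambda>k. 1 - a*q^k) has_prod qpoch_inf a q"
  unfolding qpoch_inf_def using convergent_prod_has_prod qpoch_conv by blast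

lemma qpoch_LIMSEQ: fixes q :: complex assumes "norm q < 1" shows "(\<lambda>n. qpoch a q n) \<longlonglongrightarrow> qpoch_inf a q"
proof -
  have "(\<lambda>n. \<Prod>i\<le>n. 1 - a*q^i) \<longlonglongrightarrow> qpoch_inf a q"
    unfolding qpoch_inf_def using convergent_prod_LIMSEQ qpoch_conv[OF assms] by blast
  moreover have "(\<lambda>n. \<Prod>i\<le>n. 1 - a*q^i) = (\<lambda>n. qpoch a q (Suc n))"
    by (auto simp: qpoch_def lessThan_Suc_atMost)
  ultimately show ?thesis using LIMSEQ_imp_Suc by metis
qed

lemma qpoch_inf_shift1: fixes q :: complex assumes "norm q < 1" shows "qpoch_inf a q = (1 - a) * qpoch_inf (a*q) q"
proof -
  have "(\<lambda>n. qpoch a q (Suc n)) \<longlonglongrightarrow> qpoch_inf a q"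
    using qpoch_LIMSEQ[OF assms] LIMSEQ_Suc by blast
  moreover have "(\<lambda>n. qpoch a q (Suc n)) \<longlonglongrightarrow> (1 - a) * qpoch_inf (a*q) q"
    unfolding qpoch_Suc' using qpoch_LIMSEQ[OF assms] by (intro tendsto_mult) auto
  ultimately show ?thesis using LIMSEQ_unique by blast
qed

lemma qpoch_inf_split: fixes q :: complex assumes "norm q < 1" shows "qpoch_inf a q = qpoch a q m * qpoch_inf (a*q^m) q"
proof -
  have "(\<lambda>n. qpoch a q (n+m)) \<longlonglongrightarrow> qpoch_inf a q"
    using qpoch_LIMSEQ[OF assms] LIMSEQ_ignore_initial_segment by blast
  moreover have "(\<lambda>n. qpoch a q (n+m)) \<longlonglongrightarrow> qpoch a q m * qpoch_inf (a*q^m) q"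
    unfolding add.commute[of _ m] qpoch_add using qpoch_LIMSEQ[OF assms] by (intro tendsto_mult) auto
  ultimately show ?thesis using LIMSEQ_unique by blast
qed

definition lbq :: "real \<Rightarrow> real \<Rightarrow> real" where "lbq b r = (\<Prod>k. 1 - b*r^k)"

lemma lbq_props:
  assumes b: "0 \<le> b" "b < 1" and r: "0 \<le> r" "r < 1"
  shows "lbq b r > 0" "lbq b r \<le> (\<Prod>k<n. 1 - b*r^k)"
proof -
  have fpos: "1 - b*r^k > 0" for k
  proof -
    have "b*r^k \<le> b*1" using b r by (intro mult_left_mono power_le_one) auto
    then show ?thesis using b by linarith
  qed
  have summ: "summable (\<lambda>k. norm ((1 - b*r^k) - 1))"
  proof -
    have "summable (\<lambda>k. b * r ^ k)" using r by (intro summable_mult summable_geometric) auto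
    then show ?thesis using b r by (simp add: abs_mult)
  qed
  have cp: "convergent_prod (\<lambda>k. 1 - b*r^k)"
    using summ by (intro abs_convergent_prod_imp_convergent_prod summable_imp_abs_convergent_prod)
  have lim: "(\<lambda>n. \<Prod>k<n. 1 - b*r^k) \<longlonglongrightarrow> lbq b r"
  proof -
    have "(\<lambda>n. \<Prod>i\<le>n. 1 - b*r^i) \<longlonglongrightarrow> lbq b r"
      unfolding lbq_def using convergent_prod_LIMSEQ cp by blast
    then have "(\<lambda>n. \<Prod>i<Suc n. 1 - b*r^i) \<longlonglongrightarrow> lbq b r"
      by (simp add: lessThan_Suc_atMost)
    then show ?thesis by (rule LIMSEQ_imp_Suc)
  qed
  have dec: "decseq (\<lambda>n. \<Prod>k<n. 1 - b*r^k)"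
  proof (rule decseq_SucI)
    fix n
    have "(\<Prod>k<n. 1 - b*r^k) * (1 - b*r^n) \<le> (\<Prod>k<n. 1 - b*r^k) * 1"
      using fpos b r by (intro mult_left_mono prod_nonneg) (auto intro: less_imp_le mult_nonneg_nonneg)
    then show "(\<Prod>k<Suc n. 1 - b*r^k) \<le> (\<Prod>k<n. 1 - b*r^k)" by simp
  qed
  show "lbq b r \<le> (\<Prod>k<n. 1 - b*r^k)" using decseq_ge[OF dec lim] .
  have "lbq b r \<noteq> 0" unfolding lbq_def using prodinf_nonzero[OF cp] fpos by (metis less_irrefl)
  moreover have "lbq b r \<ge> 0"
    proof (rule LIMSEQ_le_const[OF lim], intro exI allI impI)
    fix n show "0 \<le> (\<Prod>k<n. 1 - b*r^k)" using fpos by (intro prod_nonneg) (simp add: less_imp_le)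
  qed
  ultimately show "lbq b r > 0" by linarith
qed

lemma qpoch_norm_lb:
  assumes "norm a \<le> b" "b < 1" "norm q \<le> r" "r < 1"
  shows "norm (qpoch a q n) \<ge> lbq b r"
proof -
  have b0: "0 \<le> b" using assms(1) norm_ge_zero order_trans by blast
  have r0: "0 \<le> r" using assms(3) norm_ge_zero order_trans by blast
  have "lbq b r \<le> (\<Prod>k<n. 1 - b*r^k)" using lbq_props[OF b0 assms(2) r0 assms(4)] by blast
  also have "\<dots> \<le> (\<Prod>k<n. norm (1 - a*q^k))"
  proof (rule prod_mono, safe)
    fix k
    have br: "b*r^k \<le> b*1" using b0 r0 assms by (intro mult_left_mono power_le_one) auto
    then show "0 \<le> 1 - b*r^k" using assms by linarith
    have "norm (a*q^k) \<le> b*r^k"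
      unfolding norm_mult norm_power using assms b0 r0
      by (intro mult_mono power_mono) auto
    moreover have "norm (1::complex) - norm (a*q^k) \<le> norm (1 - a*q^k)" by (rule norm_triangle_ineq2)
    ultimately show "1 - b*r^k \<le> norm (1 - a*q^k)" by simp
  qed
  also have "\<dots> = norm (qpoch a q n)" by (simp add: qpoch_def prod_norm)
  finally show ?thesis .
qed

lemma qpoch_inf_norm_lb:
  assumes "norm a \<le> b" "b < 1" "norm q \<le> r" "r < 1"
  shows "norm (qpoch_inf a q) \<ge> lbq b r"
proof -
  have "norm q < 1" using assms by linarith
  then have "(\<lambda>n. norm (qpoch a q n)) \<longlonglongrightarrow> norm (qpoch_inf a q)"
    by (intro tendsto_norm qpoch_LIMSEQ)
  then show ?thesis by (rule LIMSEQ_le_const) (use qpoch_norm_lb[OF assms] in auto)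
qed

lemma lbq_pos: "norm (q::complex) < 1 \<Longrightarrow> lbq (norm q) (norm q) > 0"
  by (intro lbq_props) auto

lemma geom_bound:
  fixes f :: "nat \<Rightarrow> complex"
  assumes "\<And>r. norm (f r) \<le> c * x^r" "0 \<le> x" "x < 1"
  shows "summable f" "summable (\<lambda>r. norm (f r))" "norm (suminf f) \<le> c/(1-x)"
proof -
  have g: "summable (\<lambda>r. c * x^r)"
    using assms by (intro summable_mult summable_geometric) auto
  show sn: "summable (\<lambda>r. norm (f r))"
    by (rule summable_comparison_test'[OF g]) (use assms in auto)
  show "summable f"
    by (rule summable_comparison_test'[OF g]) (use assms in auto)
  have "norm (suminf f) \<le> (\<Sum>r. norm (f r))" by (rule summable_norm[OF sn])
  also have "\<dots> \<le> (\<Sum>r. c * x^r)" by (rule suminf_le) (use assms sn g in auto)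
  also have "\<dots> = c * (1/(1-x))" using assms by (simp add: suminf_mult suminf_geometric)
  finally show "norm (suminf f) \<le> c/(1-x)" by simp
qed

lemma qpoch_pp_nz: "norm (p::complex) < 1 \<Longrightarrow> qpoch p p r \<noteq> 0"
  using qpoch_norm_lb[of p "norm p" p "norm p" r] lbq_pos[of p] by auto

lemma qpoch_pp_inv_bound: "norm (p::complex) < 1 \<Longrightarrow> norm (1 / qpoch p p r) \<le> 1 / lbq (norm p) (norm p)"
  using qpoch_norm_lb[of p "norm p" p "norm p" r] lbq_pos[of p]
  by (simp add: norm_divide divide_simps)

lemma mlt1: "0 \<le> (x::real) \<Longrightarrow> x < 1 \<Longrightarrow> 0 \<le> y \<Longrightarrow> y \<le> 1 \<Longrightarrow> x * y < 1"
proof -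
  assume a: "0 \<le> x" "x < 1" "0 \<le> y" "y \<le> 1"
  have "x * y \<le> x * 1" using a by (intro mult_left_mono) auto
  then show ?thesis using a by simp
qed

lemma one_minus_pow_nz: "norm (p::complex) < 1 \<Longrightarrow> 1 - p * p^m \<noteq> 0"
proof
  assume "norm p < 1" "1 - p * p ^ m = 0"
  then have "norm (p * p^m) = 1" by (metis eq_iff_diff_eq_0 norm_one)
  moreover have "norm (p * p^m) < 1" using \<open>norm p < 1\<close> 
    unfolding norm_mult norm_power by (intro mlt1 power_le_one) auto
  ultimately show False by simp
qed

definition tri :: "nat \<Rightarrow> nat" where "tri n = n * (n - 1) div 2"

lemma tri_0[simp]: "tri 0 = 0" by (simp add: tri_def)
lemma tri_Suc: "tri (Suc n) = tri n + n"
proof -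
  have "even (n * (n - 1))" by (cases n) auto
  then show ?thesis unfolding tri_def by (cases n) (auto elim!: evenE simp: algebra_simps)
qed
lemma tri_ge: "tri (Suc m) \<ge> m" by (simp add: tri_Suc)


lemma hl_t1: fixes s p :: complex assumes nz: "1 - p * p^m \<noteq> 0" and nz2: "qpoch p p m \<noteq> 0"
  shows "s^Suc m / qpoch p p (Suc m) - (s*p)^Suc m / qpoch p p (Suc m) = s * (s^m / qpoch p p m)"
proof -
  have e: "(s*p)^Suc m = s^Suc m * (p * p^m)" by (simp add: power_mult_distrib)
  have "s^Suc m / qpoch p p (Suc m) - (s*p)^Suc m / qpoch p p (Suc m) = 
     (s^Suc m * (1 - p * p^m)) / (qpoch p p m * (1 - p * p^m))"
    unfolding e qpoch_Suc by (simp add: diff_divide_distrib right_diff_distrib)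
  also have "\<dots> = s^Suc m / qpoch p p m" using nz by simp
  finally show ?thesis by simp
qed

lemma hl_t2: fixes s p :: complex assumes nz: "1 - p * p^m \<noteq> 0" and nz2: "qpoch p p m \<noteq> 0"
  shows "(-1)^Suc m * p^tri (Suc m) * s^Suc m / qpoch p p (Suc m) - (-1)^Suc m * p^tri (Suc m) * (s*p)^Suc m / qpoch p p (Suc m) = - s * ((-1)^m * p^tri m * (s*p)^m / qpoch p p m)"
proof -
  have e: "(s*p)^Suc m = s^Suc m * (p * p^m)" by (simp add: power_mult_distrib)
  have "(-1)^Suc m * p^tri (Suc m) * s^Suc m / qpoch p p (Suc m) - (-1)^Suc m * p^tri (Suc m) * (s*p)^Suc m / qpoch p p (Suc m)
     = ((-1)^Suc m * p^tri (Suc m) * s^Suc m * (1 - p * p^m)) / (qpoch p p m * (1 - p * p^m))"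
    unfolding e qpoch_Suc by (simp add: diff_divide_distrib right_diff_distrib mult_ac)
  also have "\<dots> = (-1)^Suc m * p^tri (Suc m) * s^Suc m / qpoch p p m" using nz by simp
  also have "\<dots> = - s * ((-1)^m * p^tri m * (s*p)^m / qpoch p p m)"
    unfolding tri_Suc by (simp add: power_add power_mult_distrib mult_ac)
  finally show ?thesis .
qed

lemma hl_t3: fixes s p :: complex
  shows "(-1)^Suc n * p^tri (Suc n) * s^Suc n / qpoch p p (Suc n) = ((-1)^n * p^tri n * s^n / qpoch p p n) * (- s * p^n / (1 - p * p^n))"
    unfolding qpoch_Suc tri_Suc by (simp add: power_add)

lemma euler1:
  fixes t p :: complex
  assumes p: "norm p < 1" and t: "norm t < 1"
  shows "(\<lambda>r. t^r / qpoch p p r) sums (1 / qpoch_inf t p)"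
proof -
  define L where "L = lbq (norm p) (norm p)"
  have L: "L > 0" using lbq_pos[OF p] L_def by simp
  define F where "F s = (\<Sum>r. s^r / qpoch p p r)" for s :: complex
  have tb: "norm (s^r / qpoch p p r) \<le> (1/L) * norm s ^ r" for s r
  proof -
    have "norm (s^r / qpoch p p r) = norm s ^ r * norm (1 / qpoch p p r)"
      by (simp add: norm_divide norm_power)
    also have "\<dots> \<le> norm s ^ r * (1/L)"
      using qpoch_pp_inv_bound[OF p] L_def by (intro mult_left_mono) auto
    finally show ?thesis by (simp add: mult_ac)
  qed
  have summ: "summable (\<lambda>r. s^r / qpoch p p r)" if "norm s < 1" for s
    by (rule geom_bound(1)[of _ "1/L" "norm s"]) (use tb that in auto)
  have fe: "F s * (1 - s) = F (s*p)" if s: "norm s < 1" for s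
  proof -
    have sp: "norm (s*p) < 1" using s p unfolding norm_mult by (intro mlt1) auto
    have "F s - F (s*p) = (\<Sum>r. s^r / qpoch p p r - (s*p)^r / qpoch p p r)"
      unfolding F_def by (rule suminf_diff) (use summ s sp in auto)
    also have "\<dots> = (\<Sum>m. s^Suc m / qpoch p p (Suc m) - (s*p)^Suc m / qpoch p p (Suc m))"
      by (subst suminf_split_head) (use summ s sp in \<open>auto intro!: summable_diff\<close>)
    also have "\<dots> = (\<Sum>m. s * (s^m / qpoch p p m))"
      by (intro suminf_cong hl_t1 one_minus_pow_nz[OF p] qpoch_pp_nz[OF p])
    also have "\<dots> = s * F s" unfolding F_def by (rule suminf_mult) (use summ s in auto)
    finally show ?thesis by (simp add: algebra_simps)
  qed
  have iter: "F t * qpoch t p N = F (t * p^N)" for N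
  proof (induction N)
    case 0 then show ?case by simp
  next
    case (Suc N)
    have "norm (t*p^N) < 1" using t p
      unfolding norm_mult norm_power by (intro mlt1 power_le_one) auto
    then have e: "F (t*p^N) * (1 - t*p^N) = F (t*p^N*p)" by (rule fe)
    have "F t * qpoch t p (Suc N) = (F t * qpoch t p N) * (1 - t*p^N)" by (simp add: qpoch_Suc mult_ac)
    also have "\<dots> = F (t*p^N*p)" using Suc e by simp
    also have "t*p^N*p = t*p^Suc N" by (simp add: mult_ac)
    finally show ?case .
  qed
  have small: "norm (F s - 1) \<le> (norm s / L) / (1 - norm t)" if "norm s \<le> norm t" for s
  proof -
    have s1: "norm s < 1" using that t by simp
    have "F s - 1 = (\<Sum>m. s^Suc m / qpoch p p (Suc m))"
      unfolding F_def by (subst suminf_split_head) (use summ s1 in auto)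
    also have "norm \<dots> \<le> (norm s / L) / (1 - norm t)"
    proof (rule geom_bound(3))
      fix r
      have "norm (s^Suc r / qpoch p p (Suc r)) \<le> (1/L) * norm s ^ Suc r" by (rule tb)
      also have "\<dots> = (norm s / L) * norm s ^ r" by simp
      also have "\<dots> \<le> (norm s / L) * norm t ^ r"
        using L that by (intro mult_left_mono power_mono) auto
      finally show "norm (s^Suc r / qpoch p p (Suc r)) \<le> (norm s / L) * norm t ^ r" .
    qed (use t in auto)
    finally show ?thesis .
  qed
  have tp0: "(\<lambda>N. t * p^N) \<longlonglongrightarrow> 0"
    using p by (intro tendsto_mult_right_zero LIMSEQ_power_zero) 
  have "(\<lambda>N. F (t * p^N) - 1) \<longlonglongrightarrow> 0"
  proof (rule Lim_null_comparison)
    show "\<forall>\<^sub>F N in sequentially. norm (F (t * p^N) - 1) \<le> (norm (t*p^N) / L) / (1 - norm t)"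
    proof (intro always_eventually allI small)
      fix N show "norm (t*p^N) \<le> norm t" using p
        by (simp add: norm_mult norm_power mult_left_le power_le_one)
    qed
    have "(\<lambda>N. norm (t*p^N)) \<longlonglongrightarrow> 0" using tp0 by (simp add: tendsto_norm_zero)
    then show "(\<lambda>N. (norm (t*p^N) / L) / (1 - norm t)) \<longlonglongrightarrow> 0"
      by (intro tendsto_divide_zero) auto
  qed
  then have "(\<lambda>N. F (t * p^N)) \<longlonglongrightarrow> 1" by (simp add: LIM_zero_iff)
  moreover have "(\<lambda>N. F (t * p^N)) \<longlonglongrightarrow> F t * qpoch_inf t p"
    unfolding iter[symmetric] by (intro tendsto_mult tendsto_const qpoch_LIMSEQ p)
  ultimately have "F t * qpoch_inf t p = 1" using LIMSEQ_unique by blast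
  then have "F t = 1 / qpoch_inf t p"
  proof -
    assume h: "F t * qpoch_inf t p = 1"
    then have "qpoch_inf t p \<noteq> 0" by auto
    then show ?thesis using h by (simp add: eq_divide_eq)
  qed
  then show ?thesis unfolding F_def using summable_sums[OF summ[OF t]] by simp
qed

lemma euler2:
  fixes a p :: complex
  assumes p: "norm p < 1"
  shows "(\<lambda>r. (-1)^r * p^tri r * a^r / qpoch p p r) sums qpoch_inf a p"
proof -
  define L where "L = lbq (norm p) (norm p)"
  have L: "L > 0" using lbq_pos[OF p] L_def by simp
  define g where "g s r = (-1)^r * p^tri r * s^r / qpoch p p r" for s :: complex and r
  define E where "E s = suminf (g s)" for s
  have summ: "summable (g s)" for s
  proof -
    have "(\<lambda>n. norm s * norm p ^ n / (1 - norm p)) \<longlonglongrightarrow> 0"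
      using p by (intro tendsto_divide_zero tendsto_mult_right_zero LIMSEQ_power_zero) auto
    then have "\<forall>\<^sub>F n in sequentially. norm s * norm p ^ n / (1 - norm p) < 1/2"
      by (rule order_tendstoD) auto
    then obtain N where N: "\<And>n. n \<ge> N \<Longrightarrow> norm s * norm p ^ n / (1 - norm p) < 1/2"
      by (auto simp: eventually_sequentially)
    show ?thesis
    proof (rule summable_ratio_test[of "1/2" N])
      fix n assume n: "n \<ge> N"
      have gs: "g s (Suc n) = g s n * (- s * p^n / (1 - p * p^n))"
        unfolding g_def by (rule hl_t3)
      have d: "1 - norm p \<le> norm (1 - p * p^n)"
      proof -
        have "norm (p * p^n) \<le> norm p" using p
          by (simp add: norm_mult norm_power mult_left_le power_le_one)
        moreover have "norm (1::complex) - norm (p*p^n) \<le> norm (1 - p*p^n)" by (rule norm_triangle_ineq2)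
        ultimately show ?thesis by simp
      qed
      have "norm (- s * p^n / (1 - p * p^n)) = norm s * norm p ^ n / norm (1 - p*p^n)"
        by (simp add: norm_mult norm_divide norm_power)
      also have "\<dots> \<le> norm s * norm p ^ n / (1 - norm p)"
        using p d by (intro divide_left_mono mult_pos_pos) auto
      also have "\<dots> \<le> 1/2" using N[OF n] by simp
      finally have "norm (- s * p^n / (1 - p * p^n)) \<le> 1/2" .
      then have "norm (g s n) * norm (- s * p^n / (1 - p * p^n)) \<le> norm (g s n) * (1/2)"
        by (intro mult_left_mono) auto
      then show "norm (g s (Suc n)) \<le> 1/2 * norm (g s n)"
        unfolding gs norm_mult[of "g s n"] by (simp add: mult.commute)
    qed simp
  qed
  have fe: "E s = (1 - s) * E (s*p)" for s
  proof -
    have "E s - E (s*p) = (\<Sum>r. g s r - g (s*p) r)"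
      unfolding E_def by (rule suminf_diff) (use summ in auto)
    also have "\<dots> = (\<Sum>m. g s (Suc m) - g (s*p) (Suc m))"
    proof -
      have sd: "summable (\<lambda>r. g s r - g (s*p) r)" by (intro summable_diff summ)
      show ?thesis by (subst suminf_split_head[OF sd]) (simp add: g_def)
    qed
    also have "\<dots> = (\<Sum>m. (- s) * g (s*p) m)"
      unfolding g_def by (intro suminf_cong hl_t2 one_minus_pow_nz[OF p] qpoch_pp_nz[OF p])
    also have "\<dots> = - s * E (s*p)" unfolding E_def by (rule suminf_mult) (rule summ)
    finally show ?thesis by (simp add: algebra_simps)
  qed
  have iter: "E a = qpoch a p N * E (a * p^N)" for N
  proof (induction N)
    case 0 then show ?case by simp
  next
    case (Suc N)
    then show ?case using fe[of "a*p^N"] by (simp add: qpoch_Suc mult_ac)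
  qed
  have small: "norm (E s - 1) \<le> (norm s / L) / (1 - norm p)" if "norm s \<le> 1" for s
  proof -
    have "E s - 1 = (\<Sum>m. g s (Suc m))"
      unfolding E_def using suminf_split_head[OF summ[of s]] by (simp add: g_def)
    also have "norm \<dots> \<le> (norm s / L) / (1 - norm p)"
    proof (rule geom_bound(3))
      fix r
      have "norm (g s (Suc r)) = norm p ^ tri (Suc r) * norm s ^ Suc r * norm (1 / qpoch p p (Suc r))"
        by (simp add: g_def norm_mult norm_divide norm_power)
      also have "\<dots> \<le> norm p ^ r * norm s * (1/L)"
      proof (intro mult_mono)
        show "norm p ^ tri (Suc r) \<le> norm p ^ r" using p tri_ge by (intro power_decreasing) auto
        show "norm s ^ Suc r \<le> norm s" using that 
          by (simp add: mult_left_le power_le_one)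
        show "norm (1 / qpoch p p (Suc r)) \<le> 1/L" using qpoch_pp_inv_bound[OF p] L_def by simp
      qed auto
      finally show "norm (g s (Suc r)) \<le> (norm s / L) * norm p ^ r" by (simp add: mult_ac)
    qed (use p in auto)
    finally show ?thesis .
  qed
  have ap0: "(\<lambda>N. a * p^N) \<longlonglongrightarrow> 0"
    using p by (intro tendsto_mult_right_zero LIMSEQ_power_zero) 
  have "(\<lambda>N. E (a * p^N) - 1) \<longlonglongrightarrow> 0"
  proof (rule Lim_null_comparison)
    have "(\<lambda>N. norm (a*p^N)) \<longlonglongrightarrow> 0" using ap0 by (simp add: tendsto_norm_zero)
    then have "\<forall>\<^sub>F N in sequentially. norm (a*p^N) < 1"
      by (rule order_tendstoD(2)) simp
    then show "\<forall>\<^sub>F N in sequentially. norm (E (a * p^N) - 1) \<le> (norm (a*p^N) / L) / (1 - norm p)"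
      by eventually_elim (intro small, simp)
    have "(\<lambda>N. norm (a*p^N)) \<longlonglongrightarrow> 0" using ap0 by (simp add: tendsto_norm_zero)
    then show "(\<lambda>N. (norm (a*p^N) / L) / (1 - norm p)) \<longlonglongrightarrow> 0"
      by (intro tendsto_divide_zero) auto
  qed
  then have "(\<lambda>N. E (a * p^N)) \<longlonglongrightarrow> 1" by (simp add: LIM_zero_iff)
  then have "(\<lambda>N. qpoch a p N * E (a * p^N)) \<longlonglongrightarrow> qpoch_inf a p * 1"
    by (intro tendsto_mult qpoch_LIMSEQ p)
  then have "E a = qpoch_inf a p" unfolding iter[symmetric] by (simp add: LIMSEQ_const_iff)
  then show ?thesis using summable_sums[OF summ[of a]] unfolding E_def g_def by simp
qed

definition trZ :: "int \<Rightarrow> int" where "trZ s = s*(s-1) div 2"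
definition thc :: "complex \<Rightarrow> complex \<Rightarrow> int \<Rightarrow> complex" where
  "thc p z s = (-1) powi s * p powi (trZ s) * z powi s"

lemma trZ_twice: "2 * trZ s = s*(s-1)"
proof -
  have "even (s*(s-1))" by auto
  then show ?thesis unfolding trZ_def by auto
qed

lemma tri_twice: "2 * int (tri r) = int r * (int r - 1)"
proof -
  have "even (r*(r-1))" by auto
  then have "2 * tri r = r * (r - 1)" unfolding tri_def by auto
  then have "int (2 * tri r) = int (r * (r - 1))" by simp
  then show ?thesis by (cases r) (auto simp: algebra_simps)
qed

lemma trZ_add: "trZ (m + int r) = trZ m + int (tri r) + m * int r"
proof -
  have f1: "2 * trZ (m + int r) = m*m + 2*(m*int r) + int r*int r - m - int r"
    using trZ_twice[of "m + int r"] by (simp add: algebra_simps)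
  have f2: "2 * trZ m = m*m - m" using trZ_twice[of m] by (simp add: algebra_simps)
  have f3: "2 * int (tri r) = int r * int r - int r" using tri_twice[of r] by (simp add: algebra_simps)
  show ?thesis using f1 f2 f3 by linarith
qed

lemma trZ_nat: "trZ (int n) = int (tri n)"
  using trZ_add[of 0 n] by (simp add: trZ_def)

lemma trZ_neg: "trZ (- int u - 1) = int (tri (Suc u)) + int (Suc u)"
proof -
  have "2 * trZ (- int u - 1) = 2 * (int (tri (Suc u)) + int (Suc u))"
    using trZ_twice[of "- int u - 1"] tri_twice[of "Suc u"] by (simp add: algebra_simps)
  then show ?thesis by simp
qed

lemma thc_nat: "thc p z (int n) = (-1)^n * p^tri n * z^n"
  by (simp add: thc_def trZ_nat)

lemma thc_neg: "thc p z (- int u - 1) = (-1)^Suc u * p^(tri (Suc u) + Suc u) / z^Suc u"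
proof -
  have e: "- int u - 1 = - int (Suc u)" by simp
  have "(-1::complex) powi (- int (Suc u)) = (-1)^Suc u"
    unfolding power_int_minus power_int_of_nat by (cases "even (Suc u)") auto
  moreover have "p powi trZ (- int u - 1) = p^(tri (Suc u) + Suc u)"
    unfolding trZ_neg by (metis of_nat_add power_int_of_nat)
  moreover have "z powi (- int (Suc u)) = 1 / z^Suc u"
    unfolding power_int_minus_divide power_int_of_nat ..
  ultimately show ?thesis unfolding thc_def e by simp
qed

lemma thc_shift:
  assumes p: "p \<noteq> 0" and z: "z \<noteq> 0"
  shows "thc p z (m + int r) * ((p/z)^r / qpoch p p r) =
         thc p z m * ((-1)^r * p^tri r * (p powi (m+1))^r / qpoch p p r)"
proof -
  have a: "(-1::complex) powi (m + int r) = (-1) powi m * (-1)^r"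
    by (simp add: power_int_add)
  have b: "p powi trZ (m + int r) = p powi trZ m * p^tri r * p powi (m * int r)"
    unfolding trZ_add using p by (simp add: power_int_add)
  have c: "z powi (m + int r) = z powi m * z^r" using z by (simp add: power_int_add)
  have d: "(p powi (m+1))^r = p powi (m * int r) * p^r"
  proof -
    have "(p powi (m+1))^r = p powi ((m+1) * int r)"
      by (simp add: power_int_mult flip: power_int_of_nat)
    also have "\<dots> = p powi (m * int r) * p^r"
      using p by (simp add: algebra_simps power_int_add)
    finally show ?thesis .
  qed
  show ?thesis unfolding thc_def a b c d using z
    by (simp add: power_divide field_simps)
qed

lemma qpoch_inf_zero_neg:
  assumes p: "norm p < 1" "p \<noteq> 0" and m: "m < 0"
  shows "qpoch_inf (p powi (m+1)) p = 0"
proof -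
  define k where "k = nat (-(m+1))"
  have "int k = -(m+1)" using m k_def by simp
  have "1 - p powi (m+1) * p^k = 0"
  proof -
    have "p powi (m+1) * p^k = p powi (m + 1 + int k)"
      using p by (simp add: power_int_add)
    also have "m + 1 + int k = 0" using \<open>int k = -(m+1)\<close> by simp
    finally show ?thesis by simp
  qed
  then show ?thesis using has_prod_zeroI[OF qpoch_inf_has_prod[OF p(1)]] by blast
qed

lemma has_sum_int_split:
  fixes f :: "int \<Rightarrow> 'a::topological_comm_monoid_add"
  assumes "((\<lambda>n. f (int n)) has_sum a) UNIV" "((\<lambda>u. f (- int u - 1)) has_sum b) UNIV"
  shows "(f has_sum (a + b)) UNIV"
proof -
  have 1: "(f has_sum a) (range int)"
    using assms(1) by (subst has_sum_reindex) (auto simp: o_def)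
  have inj: "inj (\<lambda>u::nat. - int u - 1)" by (auto simp: inj_def)
  have 2: "(f has_sum b) (range (\<lambda>u. - int u - 1))"
    using assms(2) inj by (subst has_sum_reindex) (auto simp: o_def)
  have d: "range int \<inter> range (\<lambda>u. - int u - 1) = {}" by auto
  have u: "range int \<union> range (\<lambda>u. - int u - 1) = UNIV"
  proof -
    have "s \<in> range int \<union> range (\<lambda>u. - int u - 1)" for s :: int
    proof (cases "s \<ge> 0")
      case True then have "s = int (nat s)" by simp
      then show ?thesis by blast
    next
      case False then have "s = - int (nat (- s - 1)) - 1" by simp
      then show ?thesis by blast
    qed
    then show ?thesis by blast
  qed
  show ?thesis using has_sum_Un_disjoint[OF 1 2 d] u by simp
qed

lemma abs_summable_times:
  fixes f :: "'a \<Rightarrow> complex" and g :: "'b \<Rightarrow> complex"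
  assumes f: "(\<lambda>x. norm (f x)) summable_on A" and g: "(\<lambda>y. norm (g y)) summable_on B"
  shows "(\<lambda>xy. norm (f (fst xy) * g (snd xy))) summable_on (A \<times> B)"
proof -
  let ?h = "\<lambda>xy. f (fst xy) * g (snd xy)"
  have "(\<lambda>xy. norm (?h xy)) summable_on Sigma A (\<lambda>_. B)"
  proof (rule Infinite_Sum.abs_summable_on_Sigma_iff[THEN iffD2], intro conjI ballI)
    fix x assume "x \<in> A"
    show "(\<lambda>y. norm (?h (x, y))) summable_on B"
      unfolding fst_conv snd_conv norm_mult using g by (rule summable_on_cmult_right)
  next
    have e: "infsum (\<lambda>y. norm (?h (x, y))) B = norm (f x) * infsum (\<lambda>y. norm (g y)) B" for x
      unfolding fst_conv snd_conv norm_mult by (intro infsum_cmult_right) (use g in auto)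
    have "(\<lambda>x. norm (norm (f x) * infsum (\<lambda>y. norm (g y)) B)) summable_on A"
    proof -
      have "(\<lambda>x. norm (f x) * infsum (\<lambda>y. norm (g y)) B) summable_on A"
        using f by (rule summable_on_cmult_left)
      moreover have "infsum (\<lambda>y. norm (g y)) B \<ge> 0" by (rule infsum_nonneg) auto
      ultimately show ?thesis by (simp add: abs_mult)
    qed
    then show "(\<lambda>x. norm (infsum (\<lambda>y. norm (?h (x, y))) B)) summable_on A" unfolding e .
  qed
  then show ?thesis by simp
qed

lemma e2_summ_norm:
  fixes p s :: complex
  assumes p: "norm p < 1"
  shows "summable (\<lambda>r. norm ((-1)^r * p^tri r * s^r / qpoch p p r))"
proof -
  define g where "g r = (-1)^r * p^tri r * s^r / qpoch p p r" for r
  have "(\<lambda>n. norm s * norm p ^ n / (1 - norm p)) \<longlonglongrightarrow> 0"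
    using p by (intro tendsto_divide_zero tendsto_mult_right_zero LIMSEQ_power_zero) auto
  then have "\<forall>\<^sub>F n in sequentially. norm s * norm p ^ n / (1 - norm p) < 1/2"
    by (rule order_tendstoD) auto
  then obtain N where N: "\<And>n. n \<ge> N \<Longrightarrow> norm s * norm p ^ n / (1 - norm p) < 1/2"
    by (auto simp: eventually_sequentially)
  have "summable (\<lambda>r. norm (g r))"
  proof (rule summable_ratio_test[of "1/2" N])
    fix n assume n: "n \<ge> N"
    have gs: "g (Suc n) = g n * (- s * p^n / (1 - p * p^n))"
      unfolding g_def by (rule hl_t3)
    have d: "1 - norm p \<le> norm (1 - p * p^n)"
    proof -
      have "norm (p * p^n) \<le> norm p" using p
        by (simp add: norm_mult norm_power mult_left_le power_le_one)
      moreover have "norm (1::complex) - norm (p*p^n) \<le> norm (1 - p*p^n)" by (rule norm_triangle_ineq2)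
      ultimately show ?thesis by simp
    qed
    have "norm (- s * p^n / (1 - p * p^n)) = norm s * norm p ^ n / norm (1 - p*p^n)"
      by (simp add: norm_mult norm_divide norm_power)
    also have "\<dots> \<le> norm s * norm p ^ n / (1 - norm p)"
      using p d by (intro divide_left_mono mult_pos_pos) auto
    also have "\<dots> \<le> 1/2" using N[OF n] by simp
    finally have "norm (- s * p^n / (1 - p * p^n)) \<le> 1/2" .
    then have "norm (g n) * norm (- s * p^n / (1 - p * p^n)) \<le> norm (g n) * (1/2)"
      by (intro mult_left_mono) auto
    then show "norm (norm (g (Suc n))) \<le> 1/2 * norm (norm (g n))"
      unfolding gs norm_mult[of "g n"] by (simp add: mult.commute)
  qed simp
  then show ?thesis unfolding g_def .
qed

lemma e2_has_sum:
  fixes p s :: complex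
  assumes p: "norm p < 1"
  shows "((\<lambda>r. (-1)^r * p^tri r * s^r / qpoch p p r) has_sum qpoch_inf s p) UNIV"
  by (rule norm_summable_imp_has_sum[OF e2_summ_norm[OF p] euler2[OF p]])

lemma e1_has_sum:
  fixes p t :: complex
  assumes p: "norm p < 1" and t: "norm t < 1"
  shows "((\<lambda>r. t^r / qpoch p p r) has_sum (1 / qpoch_inf t p)) UNIV"
proof (rule norm_summable_imp_has_sum[OF _ euler1[OF p t]])
  define L where "L = lbq (norm p) (norm p)"
  have L: "L > 0" using lbq_pos[OF p] L_def by simp
  show "summable (\<lambda>r. norm (t^r / qpoch p p r))"
  proof (rule geom_bound(2)[of _ "1/L" "norm t"])
    fix r
    have "norm (t^r / qpoch p p r) = norm t ^ r * norm (1 / qpoch p p r)"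
      by (simp add: norm_divide norm_power)
    also have "\<dots> \<le> norm t ^ r * (1/L)"
      using qpoch_pp_inv_bound[OF p] L_def by (intro mult_left_mono) auto
    finally show "norm (t^r / qpoch p p r) \<le> 1/L * norm t ^ r" by (simp add: mult_ac)
  qed (use t in auto)
qed

lemma real_summable_has_sum: "summable (f :: nat \<Rightarrow> real) \<Longrightarrow> (\<forall>n. f n \<ge> 0) \<Longrightarrow> (f has_sum suminf f) UNIV"
  by (intro norm_summable_imp_has_sum) (auto simp: summable_sums)

theorem jtp:
  fixes p z :: complex
  assumes p: "norm p < 1" "p \<noteq> 0" and z: "z \<noteq> 0" "norm z \<le> 1" and pz: "norm p < norm z"
  shows "(thc p z has_sum (qpoch_inf z p * qpoch_inf (p/z) p * qpoch_inf p p)) UNIV"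
proof -
  define A where "A = p / z"
  have nA: "norm A < 1" using pz z unfolding A_def by (simp add: norm_divide)
  have nA': "norm A = norm p / norm z" unfolding A_def by (simp add: norm_divide)
  define w where "w r = A^r / qpoch p p r" for r
  define QA where "QA = qpoch_inf A p"
  have QAnz: "QA \<noteq> 0"
  proof -
    have "lbq (norm A) (norm p) > 0" using nA p by (intro lbq_props) auto
    moreover have "norm QA \<ge> lbq (norm A) (norm p)" unfolding QA_def
      using nA p by (intro qpoch_inf_norm_lb) auto
    ultimately show ?thesis by auto
  qed
  have w_hs: "(w has_sum (1 / QA)) UNIV" unfolding w_def QA_def by (rule e1_has_sum[OF p(1) nA])
  have w_abs: "(\<lambda>r. norm (w r)) summable_on UNIV"
  proof -
    define L where "L = lbq (norm p) (norm p)"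
    have L: "L > 0" using lbq_pos[OF p(1)] L_def by simp
    have "summable (\<lambda>r. norm (w r))"
    proof (rule geom_bound(2)[of _ "1/L" "norm A"])
      fix r
      have "norm (w r) = norm A ^ r * norm (1 / qpoch p p r)"
        by (simp add: w_def norm_divide norm_power)
      also have "\<dots> \<le> norm A ^ r * (1/L)"
        using qpoch_pp_inv_bound[OF p(1)] L_def by (intro mult_left_mono) auto
      finally show "norm (w r) \<le> 1/L * norm A ^ r" by (simp add: mult_ac)
    qed (use nA in auto)
    then show ?thesis using real_summable_has_sum[of "\<lambda>r. norm (w r)"] summable_on_def by auto
  qed
  have th_abs: "(\<lambda>s. norm (thc p z s)) summable_on UNIV"
  proof -
    have s1: "summable (\<lambda>n. norm (thc p z (int n)))"
    proof (rule summable_comparison_test')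
      show "summable (\<lambda>n. (1 / norm p) * norm p ^ n)" using p
        by (intro summable_mult summable_geometric) auto
      fix n :: nat
      have "norm (thc p z (int n)) = norm p ^ tri n * norm z ^ n"
        unfolding thc_nat by (simp add: norm_mult norm_power)
      also have "\<dots> \<le> norm p ^ tri n * 1"
        using z by (intro mult_left_mono power_le_one) auto
      also have "\<dots> \<le> (1 / norm p) * norm p ^ n"
      proof -
        have "norm p ^ (tri n + 1) \<le> norm p ^ n"
        proof (cases n)
          case (Suc m) then show ?thesis using p by (intro power_decreasing) (auto simp: tri_Suc)
        qed (use p in auto)
        then show ?thesis using p by (simp add: field_simps)
      qed
      finally show "norm (norm (thc p z (int n))) \<le> (1 / norm p) * norm p ^ n" by simp
    qed
    have s2: "summable (\<lambda>u. norm (thc p z (- int u - 1)))"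
    proof (rule summable_comparison_test')
      show "summable (\<lambda>u. norm A ^ u)" using nA by (intro summable_geometric) auto
      fix u :: nat
      have "norm (thc p z (- int u - 1)) = norm p ^ tri (Suc u) * (norm p ^ Suc u / norm z ^ Suc u)"
        unfolding thc_neg by (simp add: norm_mult norm_divide norm_power power_add)
      also have "\<dots> = norm p ^ tri (Suc u) * norm A ^ Suc u"
        unfolding nA' by (simp add: power_divide)
      also have "\<dots> \<le> 1 * norm A ^ u"
      proof (intro mult_mono)
        show "norm p ^ tri (Suc u) \<le> 1" using p by (intro power_le_one) auto
        show "norm A ^ Suc u \<le> norm A ^ u" using nA by (intro power_decreasing) auto
      qed auto
      finally show "norm (norm (thc p z (- int u - 1))) \<le> norm A ^ u" by simp
    qed
    have "((\<lambda>s. norm (thc p z s)) has_sum (suminf (\<lambda>n. norm (thc p z (int n))) + suminf (\<lambda>u. norm (thc p z (- int u - 1))))) UNIV"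
      by (rule has_sum_int_split) (use real_summable_has_sum s1 s2 in auto)
    then show ?thesis unfolding summable_on_def by blast
  qed
  define U where "U xy = thc p z (fst xy) * w (snd xy)" for xy
  have U_abs: "(\<lambda>xy. norm (U xy)) summable_on (UNIV \<times> UNIV)"
    unfolding U_def by (rule abs_summable_times[OF th_abs w_abs])
  then have "U summable_on (UNIV \<times> UNIV)" by (rule abs_summable_summable)
  then obtain T where T: "(U has_sum T) (UNIV \<times> UNIV)" unfolding summable_on_def by blast
  have T1: "((\<lambda>s. thc p z s * (1 / QA)) has_sum T) UNIV"
  proof (rule has_sum_Sigma'[where B="\<lambda>_. UNIV"])
    show "(U has_sum T) (Sigma UNIV (\<lambda>_. UNIV))" using T by simp
    fix s :: int
    show "((\<lambda>r. U (s, r)) has_sum thc p z s * (1 / QA)) UNIV"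
      unfolding U_def fst_conv snd_conv by (rule has_sum_cmult_right[OF w_hs])
  qed
  define V where "V mr = U (fst mr + int (snd mr), snd mr)" for mr
  have T2: "(V has_sum T) (UNIV \<times> UNIV)"
  proof -
    have "(V has_sum T) UNIV \<longleftrightarrow> (U has_sum T) UNIV"
      by (rule has_sum_reindex_bij_witness[where i="\<lambda>(s,r). (s - int r, r)" and j="\<lambda>(m,r). (m + int r, r)"])
         (auto simp: V_def)
    then show ?thesis using T by simp
  qed
  have T3: "((\<lambda>m. thc p z m * qpoch_inf (p powi (m+1)) p) has_sum T) UNIV"
  proof (rule has_sum_Sigma'[where B="\<lambda>_. UNIV"])
    show "(V has_sum T) (Sigma UNIV (\<lambda>_. UNIV))" using T2 by simp
    fix m :: int
    have "V (m, r) = thc p z m * ((-1)^r * p^tri r * (p powi (m+1))^r / qpoch p p r)" for r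
      unfolding V_def U_def w_def A_def fst_conv snd_conv by (rule thc_shift[OF p(2) z(1)])
    then show "((\<lambda>r. V (m, r)) has_sum thc p z m * qpoch_inf (p powi (m+1)) p) UNIV"
      using has_sum_cmult_right[OF e2_has_sum[OF p(1)]] by simp
  qed
  have T4: "((\<lambda>n. thc p z (int n) * qpoch_inf (p ^ (n+1)) p) has_sum T) UNIV"
  proof -
    have "((\<lambda>m. thc p z m * qpoch_inf (p powi (m+1)) p) has_sum T) (range int)"
    proof (subst has_sum_cong_neutral[where T=UNIV and g="\<lambda>m. thc p z m * qpoch_inf (p powi (m+1)) p"])
      fix m :: int assume "m \<in> UNIV - range int"
      then have "m < 0" by (metis DiffD2 nonneg_int_cases rangeI not_less)
      then show "thc p z m * qpoch_inf (p powi (m+1)) p = 0"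
        using qpoch_inf_zero_neg[OF p] by simp
    qed (use T3 in auto)
    then have "(((\<lambda>m. thc p z m * qpoch_inf (p powi (m+1)) p) \<circ> int) has_sum T) UNIV"
      by (subst has_sum_reindex[symmetric]) auto
    moreover have "((\<lambda>m. thc p z m * qpoch_inf (p powi (m+1)) p) \<circ> int) = (\<lambda>n. thc p z (int n) * qpoch_inf (p ^ (n+1)) p)"
    proof
      fix n
      have "int n + 1 = int (n+1)" by simp
      then have "p powi (int n + 1) = p ^ (n+1)" by (simp only: power_int_of_nat)
      then show "((\<lambda>m. thc p z m * qpoch_inf (p powi (m+1)) p) \<circ> int) n = thc p z (int n) * qpoch_inf (p ^ (n+1)) p"
        by simp
    qed
    ultimately show ?thesis by simp
  qed
  define QP where "QP = qpoch_inf p p"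
  define QZ where "QZ = qpoch_inf z p"
  have T5: "((\<lambda>n. thc p z (int n) * qpoch_inf (p ^ (n+1)) p) has_sum (QP * QZ)) UNIV"
  proof -
    have e: "thc p z (int n) * qpoch_inf (p ^ (n+1)) p = QP * ((-1)^n * p^tri n * z^n / qpoch p p n)" for n
    proof -
      have "QP = qpoch p p n * qpoch_inf (p ^ (n+1)) p"
        unfolding QP_def using qpoch_inf_split[OF p(1), of p n] by (simp add: mult_ac)
      then show ?thesis using qpoch_pp_nz[OF p(1), of n] unfolding thc_nat by (simp add: field_simps)
    qed
    show ?thesis unfolding e QZ_def by (rule has_sum_cmult_right[OF e2_has_sum[OF p(1)]])
  qed
  have TT: "T = QP * QZ" using has_sum_unique[OF T4 T5] .
  have "((\<lambda>s. QA * (thc p z s * (1 / QA))) has_sum (QA * T)) UNIV"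
    by (rule has_sum_cmult_right[OF T1])
  then have "(thc p z has_sum (QA * T)) UNIV" using QAnz by simp
  then show ?thesis unfolding TT QA_def QP_def QZ_def A_def by (simp add: mult_ac)
qed

definition Rr :: "complex \<Rightarrow> complex \<Rightarrow> complex" where "Rr q a = 1 / qpoch_inf a q"

definition h1t :: "complex \<Rightarrow> complex \<Rightarrow> nat \<Rightarrow> complex" where
  "h1t q y n = (-1)^n * (y^2)^n * ((q^5)^tri n * (q^n)^2) * (1 - y*(q^n)^2) * Rr q (y*q^n) / qpoch q q n"
definition h2t :: "complex \<Rightarrow> complex \<Rightarrow> nat \<Rightarrow> complex" where
  "h2t q y n = (-1)^n * (y^2)^n * ((q^5)^tri n * q^n) * (1 - y^2*(q^n)^4) * Rr q (y*q^n) / qpoch q q n"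
definition H1 where "H1 q y = suminf (h1t q y)"
definition H2 where "H2 q y = suminf (h2t q y)"

lemma tele_sum:
  fixes P Q a b :: "nat \<Rightarrow> complex"
  assumes "summable P" "summable Q" "P 0 = 0" "\<And>n. a n = P n + Q n" "\<And>n. b n = Q n + P (Suc n)"
  shows "suminf a = suminf b"
proof -
  have "suminf a = suminf P + suminf Q"
    unfolding assms(4) by (rule suminf_add[symmetric]) (use assms in auto)
  also have "suminf P = (\<Sum>n. P (Suc n))" using suminf_split_head[OF assms(1)] assms(3) by simp
  also have "(\<Sum>n. P (Suc n)) + suminf Q = suminf b"
  proof -
    have "summable (\<lambda>n. P (Suc n))" using assms(1) by (simp add: summable_Suc_iff)
    then show ?thesis unfolding assms(5) using suminf_add[of Q "\<lambda>n. P (Suc n)"] assms(2) by (simp add: add.commute)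
  qed
  finally show ?thesis .
qed

lemma pow5: "((q::complex)^5)^n = (q^n)^5"
  by (simp add: power_mult[symmetric] mult.commute)
lemma pow2: "((q::complex)^2)^n = (q^n)^2"
  by (simp add: power_mult[symmetric] mult.commute)

lemma geom_partial_le: "0 \<le> (r::real) \<Longrightarrow> r < 1 \<Longrightarrow> (\<Sum>k<N. r^k) \<le> 1 / (1 - r)"
proof -
  assume r: "0 \<le> r" "r < 1"
  have "(\<Sum>k<N. r^k) \<le> (\<Sum>k. r^k)"
    by (rule sum_le_suminf) (use r in \<open>auto intro: summable_geometric\<close>)
  also have "\<dots> = 1 / (1 - r)" using r by (simp add: suminf_geometric)
  finally show ?thesis .
qed

lemma fe_unique:
  fixes D :: "complex \<Rightarrow> complex" and q :: complex
  assumes q: "norm q < 1"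
    and fe: "\<And>x. norm x \<le> 1 \<Longrightarrow> D x = D (x*q) + x*q * D (x*q^2)"
    and bd: "\<And>x. norm x \<le> 1 \<Longrightarrow> norm (D x) \<le> C * norm x"
    and x0: "norm x0 \<le> 1"
  shows "D x0 = 0"
proof -
  define r where "r = norm q"
  have r: "0 \<le> r" "r < 1" using q r_def by auto
  have xqN: "norm (x*q^N) \<le> 1" if "norm x \<le> 1" for x N
    unfolding norm_mult norm_power using that q by (intro mult_le_one power_le_one) auto
  have tele: "D x = D (x*q^N) + (\<Sum>k<N. x*q^(k+1) * D (x*q^(k+2)))" if x: "norm x \<le> 1" for x N
  proof (induction N)
    case 0 then show ?case by simp
  next
    case (Suc N)
    have "D (x*q^N) = D (x*q^N*q) + x*q^N*q * D (x*q^N*q^2)" by (rule fe[OF xqN[OF x]])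
    moreover have "x*q^N*q = x*q^(Suc N)" "x*q^N*q^2 = x*q^(N+2)" "x*q^N*q = x*q^(N+1)"
      by (simp_all add: power_add mult_ac power2_eq_square)
    ultimately show ?case using Suc by simp
  qed
  define K where "K = max C 0"
  have K: "K \<ge> 0" "C \<le> K" unfolding K_def by auto
  define B :: "nat \<Rightarrow> real" where "B m = K * (\<Prod>j<m. r^(2*j+1) / (1 - r))" for m
  have B0: "B 0 = K" by (simp add: B_def)
  have BS: "B (Suc m) = B m * (r^(2*m+1) / (1 - r))" for m by (simp add: B_def)
  have Bnn: "B m \<ge> 0" for m unfolding B_def using K r by (intro mult_nonneg_nonneg prod_nonneg) auto
  have bdK: "norm (D x) \<le> K * norm x" if "norm x \<le> 1" for x
    using bd[OF that] K by (meson mult_right_mono norm_ge_zero order_trans)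
  have P: "norm (D y) \<le> B m * norm y ^ m" if "norm y \<le> 1" for m y
    using that
  proof (induction m arbitrary: y)
    case 0
    then show ?case using bdK[OF 0] B0 K by (simp add: mult_left_le order_trans)
  next
    case (Suc m x)
    have x: "norm x \<le> 1" using Suc.prems .
    have ineq: "norm (D x) \<le> K * r^N + B (Suc m) * norm x ^ Suc m" for N
    proof -
      have "norm (D x) \<le> norm (D (x*q^N)) + norm (\<Sum>k<N. x*q^(k+1) * D (x*q^(k+2)))"
        using tele[OF x, of N] by (metis norm_triangle_ineq)
      also have "norm (D (x*q^N)) \<le> K * r^N"
      proof -
        have "norm (D (x*q^N)) \<le> K * norm (x*q^N)" by (rule bdK[OF xqN[OF x]])
        also have "\<dots> \<le> K * r^N" using x K r
          by (intro mult_left_mono) (auto simp: norm_mult norm_power r_def mult_left_le_one_le)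
        finally show ?thesis .
      qed
      also have "norm (\<Sum>k<N. x*q^(k+1) * D (x*q^(k+2))) \<le> (\<Sum>k<N. norm x * r^(k+1) * (B m * (norm x * r^(k+2))^m))"
      proof (rule order_trans[OF norm_sum sum_mono])
        fix k assume "k \<in> {..<N}"
        have "norm (D (x*q^(k+2))) \<le> B m * norm (x*q^(k+2))^m" by (rule Suc.IH[OF xqN[OF x]])
        then show "norm (x*q^(k+1) * D (x*q^(k+2))) \<le> norm x * r^(k+1) * (B m * (norm x * r^(k+2))^m)"
          by (simp add: norm_mult norm_power r_def mult_left_mono)
      qed
      also have "(\<Sum>k<N. norm x * r^(k+1) * (B m * (norm x * r^(k+2))^m)) \<le>
                 (\<Sum>k<N. (B m * norm x ^ Suc m * r^(2*m+1)) * r^k)"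
      proof (rule sum_mono)
        fix k
        have ex: "k+1+(k+2)*m = (2*m+1) + (k+k*m)" by (simp add: algebra_simps)
        have e1: "(norm x * r^(k+2))^m = norm x^m * r^((k+2)*m)" by (simp only: power_mult_distrib power_mult)
        have "norm x * r^(k+1) * (B m * (norm x * r^(k+2))^m) = B m * (norm x * norm x^m) * (r^(k+1) * r^((k+2)*m))"
          unfolding e1 by (simp add: mult_ac)
        also have "r^(k+1) * r^((k+2)*m) = r^(2*m+1) * r^(k+k*m)"
          unfolding power_add[symmetric] ex ..
        finally have e: "norm x * r^(k+1) * (B m * (norm x * r^(k+2))^m) = (B m * norm x ^ Suc m * r^(2*m+1)) * r^(k + k*m)"
          by (simp add: mult_ac)
        have "r^(k + k*m) \<le> r^k" using r by (intro power_decreasing) auto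
        then show "norm x * r^(k+1) * (B m * (norm x * r^(k+2))^m) \<le> (B m * norm x ^ Suc m * r^(2*m+1)) * r^k"
          unfolding e using Bnn r by (intro mult_left_mono) auto
      qed
      also have "\<dots> = (B m * norm x ^ Suc m * r^(2*m+1)) * (\<Sum>k<N. r^k)" by (simp add: sum_distrib_left)
      also have "\<dots> \<le> (B m * norm x ^ Suc m * r^(2*m+1)) * (1 / (1 - r))"
        using geom_partial_le[OF r] Bnn r by (intro mult_left_mono) auto
      also have "\<dots> = B (Suc m) * norm x ^ Suc m" unfolding BS by (simp add: field_simps)
      finally show ?thesis by simp
    qed
    have "(\<lambda>N. K * r^N + B (Suc m) * norm x ^ Suc m) \<longlonglongrightarrow> K * 0 + B (Suc m) * norm x ^ Suc m"
      using r by (intro tendsto_intros LIMSEQ_power_zero) auto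
    then show "norm (D x) \<le> B (Suc m) * norm x ^ Suc m"
      by (intro LIMSEQ_le_const[of _ _ "norm (D x)"]) (use ineq in auto)
  qed
  have "(\<lambda>m. r^(2*m+1) / (1 - r)) \<longlonglongrightarrow> 0"
  proof -
    have "(\<lambda>m. r * (r^2)^m) \<longlonglongrightarrow> r * 0" using r by (intro tendsto_intros LIMSEQ_power_zero) (auto simp: power_less_one_iff)
    moreover have "(\<lambda>m. r^(2*m+1)) = (\<lambda>m. r * (r^2)^m)"
    proof
      fix m
      have "r^(2*m+1) = r^(2*m) * r" by simp
      also have "r^(2*m) = (r^2)^m" by (rule power_mult)
      finally show "r^(2*m+1) = r * (r^2)^m" by (simp only: mult.commute)
    qed
    ultimately have "(\<lambda>m. r^(2*m+1)) \<longlonglongrightarrow> 0" by simp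
    then show ?thesis by (intro tendsto_divide_zero)
  qed
  then have "\<forall>\<^sub>F m in sequentially. r^(2*m+1) / (1 - r) < 1/2" by (rule order_tendstoD) auto
  then obtain M where M: "\<And>m. m \<ge> M \<Longrightarrow> r^(2*m+1) / (1 - r) < 1/2" by (auto simp: eventually_sequentially)
  have "summable B"
  proof (rule summable_ratio_test[of "1/2" M])
    fix n assume "n \<ge> M"
    then have "B n * (r^(2*n+1) / (1 - r)) \<le> B n * (1/2)" using M Bnn by (intro mult_left_mono) (auto intro: less_imp_le)
    moreover have "norm (B (Suc n)) = B (Suc n)" "norm (B n) = B n" using Bnn[of n] Bnn[of "Suc n"] by auto
    ultimately show "norm (B (Suc n)) \<le> 1/2 * norm (B n)" unfolding BS by (simp add: mult.commute)
  qed simp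
  then have B0lim: "B \<longlonglongrightarrow> 0" by (rule summable_LIMSEQ_zero)
  have "norm (D x0) \<le> B m" for m
  proof -
    have "norm (D x0) \<le> B m * norm x0 ^ m" by (rule P[OF x0])
    also have "\<dots> \<le> B m * 1" using Bnn x0 by (intro mult_left_mono power_le_one) auto
    finally show ?thesis by simp
  qed
  then have "norm (D x0) \<le> 0" by (intro LIMSEQ_le_const[OF B0lim]) auto
  then show ?thesis by simp
qed


context
  fixes q :: complex
  assumes q: "norm q < 1"
begin

definition "LL = lbq (norm q) (norm q)"

lemma LL_pos: "LL > 0" unfolding LL_def using lbq_pos[OF q] .

lemma Rr_bound: "norm a \<le> norm q \<Longrightarrow> norm (Rr q a) \<le> 1 / LL"
proof -
  assume a: "norm a \<le> norm q"
  have "norm (qpoch_inf a q) \<ge> LL" unfolding LL_def using a q by (intro qpoch_inf_norm_lb) auto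
  then show ?thesis using LL_pos by (simp add: Rr_def norm_divide divide_simps)
qed

lemma Qinf_nz: "norm a \<le> norm q \<Longrightarrow> qpoch_inf a q \<noteq> 0"
proof -
  assume a: "norm a \<le> norm q"
  have "norm (qpoch_inf a q) \<ge> LL" unfolding LL_def using a q by (intro qpoch_inf_norm_lb) auto
  then show ?thesis using LL_pos by auto
qed

lemma Rr_rel: assumes "norm a \<le> norm q" shows "Rr q (a*q) = (1 - a) * Rr q a"
proof -
  have "norm a < 1" using assms q by simp
  then have nz: "1 - a \<noteq> 0" by auto
  have e: "qpoch_inf a q = (1 - a) * qpoch_inf (a*q) q" by (rule qpoch_inf_shift1[OF q])
  have "(1 - a) * Rr q a = (1 - a) / ((1 - a) * qpoch_inf (a*q) q)" unfolding Rr_def e by simp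
  also have "\<dots> = 1 / qpoch_inf (a*q) q" using nz by simp
  finally show ?thesis unfolding Rr_def by simp
qed

lemma qinv_bound: "norm (1 / qpoch q q n) \<le> 1 / LL"
  using qpoch_pp_inv_bound[OF q] LL_def by simp

lemma qpoch_qq_nz: "qpoch q q n \<noteq> 0" using qpoch_pp_nz[OF q] .

lemma one_minus_qn_nz: "1 - q * q^n \<noteq> 0" using one_minus_pow_nz[OF q] .

lemma term_bound:
  assumes "norm Y \<le> 1" "norm Z \<le> norm q ^ n" "norm c \<le> 2" "norm Rv \<le> 1 / LL"
  shows "norm ((-1)^n * Y * Z * c * Rv / qpoch q q n) \<le> (2 / LL^2) * norm q ^ n"
proof -
  have "norm ((-1)^n * Y * Z * c * Rv / qpoch q q n) = norm Y * norm Z * norm c * norm Rv * norm (1 / qpoch q q n)"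
    by (simp add: norm_mult norm_divide norm_power)
  also have "\<dots> \<le> 1 * norm q ^ n * 2 * (1/LL) * (1/LL)"
    using assms qinv_bound q LL_pos
    by (intro mult_mono) auto
  also have "1 * norm q ^ n * 2 * (1/LL) * (1/LL) = (2 / LL^2) * norm q ^ n"
    using LL_pos by (simp add: power2_eq_square field_simps)
  finally show ?thesis .
qed

lemma Zbound: "k \<ge> 1 \<Longrightarrow> norm ((q^5)^tri n * (q^n)^k) \<le> norm q ^ n"
proof -
  assume k: "k \<ge> 1"
  have "norm ((q^5)^tri n * (q^n)^k) = norm q ^ (5 * tri n + n * k)"
    by (simp add: norm_mult norm_power power_add power_mult)
  also have "\<dots> \<le> norm q ^ n"
  proof -
    have "n \<le> n * k" using k by simp
    then have "n \<le> 5 * tri n + n * k" by linarith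
    then show ?thesis using q by (intro power_decreasing) auto
  qed
  finally show ?thesis .
qed

lemma Zbound1: "norm ((q^5)^tri n * q^n) \<le> norm q ^ n"
  using Zbound[of 1 n] by simp

lemma c2: "norm (a::complex) \<le> 1 \<Longrightarrow> norm (1 - a) \<le> 2"
  using norm_triangle_ineq4[of 1 a] by simp

lemma term_summable:
  fixes f :: "nat \<Rightarrow> complex"
  assumes "\<And>n. norm (f n) \<le> (2 / LL^2) * norm q ^ n"
  shows "summable f"
  by (rule geom_bound(1)[of f "2 / LL^2" "norm q"]) (use assms q in auto)

lemma y_facts:
  assumes y: "norm y \<le> norm q"
  shows "norm y \<le> 1" "norm (y*q^n) \<le> norm q" "norm (y*q^n*q) \<le> norm q" "norm ((y^2)^n) \<le> 1"
    "norm (q^n) \<le> 1"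
proof -
  have qn1: "norm (q^n) \<le> 1" for n using q by (simp add: norm_power power_le_one)
  then show "norm (q^n) \<le> 1" .
  show y1: "norm y \<le> 1" using y q by simp
  have yqn: "norm (y*q^n) \<le> norm q" for n
    using y qn1[of n] by (simp add: norm_mult) (metis mult_left_le norm_ge_zero order_trans)
  then show "norm (y*q^n) \<le> norm q" .
  show "norm (y*q^n*q) \<le> norm q"
    using yqn[of "Suc n"] by (simp add: mult_ac)
  show "norm ((y^2)^n) \<le> 1" using y1 by (simp add: norm_power power_le_one)
qed

lemma sum_h1: "norm y \<le> norm q \<Longrightarrow> summable (h1t q y)"
proof -
  assume y: "norm y \<le> norm q"
  have "norm (1 - y * (q^n)^2) \<le> 2" for n
    using y_facts[OF y] by (intro c2) (simp add: norm_mult norm_power power_le_one mult_le_one)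
  then show ?thesis unfolding h1t_def[abs_def]
    by (intro term_summable term_bound) (use y_facts[OF y] Zbound Zbound1 Rr_bound in auto)
qed

lemma sum_h2: "norm y \<le> norm q \<Longrightarrow> summable (h2t q y)"
proof -
  assume y: "norm y \<le> norm q"
  have "norm (1 - y^2 * (q^n)^4) \<le> 2" for n
    using y_facts[OF y] by (intro c2) (simp add: norm_mult norm_power power_le_one mult_le_one)
  then show ?thesis unfolding h2t_def[abs_def]
    by (intro term_summable term_bound) (use y_facts[OF y] Zbound Zbound1 Rr_bound in auto)
qed

lemma identA:
  assumes y: "norm y \<le> norm q"
  shows "H1 q y = H2 q (y*q)"
proof -
  define P1 where "P1 n = (-1)^n * (y^2)^n * ((q^5)^tri n * (q^n)^2) * (1 - q^n) * Rr q (y*q^n) / qpoch q q n" for n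
  define P2 where "P2 n = (-1)^n * (y^2)^n * ((q^5)^tri n * (q^n)^3) * 1 * Rr q (y*q^n*q) / qpoch q q n" for n
  have qn1: "norm (q^n) \<le> 1" for n using q by (simp add: norm_power power_le_one)
  have y1: "norm y \<le> 1" using y q by simp
  have yqn: "norm (y*q^n) \<le> norm q" for n
    using y qn1[of n] by (simp add: norm_mult) (metis mult_left_le norm_ge_zero order_trans)
  have yqnq: "norm (y*q^n*q) \<le> norm q" for n
    using yqn[of "Suc n"] by (simp add: mult_ac)
  have Y: "norm ((y^2)^n) \<le> 1" for n using y1 by (simp add: norm_power power_le_one)
  have sP1: "summable P1" unfolding P1_def
    by (rule term_summable, rule term_bound) (use Y Zbound c2 qn1 Rr_bound yqn in auto)
  have sP2: "summable P2" unfolding P2_def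
    by (rule term_summable, rule term_bound) (use Y Zbound Rr_bound yqnq in auto)
  have a: "h1t q y n = P1 n + P2 n" for n
    unfolding h1t_def P1_def P2_def Rr_rel[OF yqn] by (simp add: field_simps qpoch_qq_nz) algebra
  have r1: "Rr q (y*q*q^n) = Rr q (y*q^n*q)" for n by (simp add: mult_ac)
  have r2: "Rr q (y*q^Suc n) = Rr q (y*q^n*q)" for n by (simp add: mult_ac)
  have b: "h2t q (y*q) n = P2 n + P1 (Suc n)" for n
    unfolding h2t_def P1_def P2_def r1 r2 Rr_rel[OF yqn] tri_Suc power_add pow5 qpoch_Suc
    using qpoch_qq_nz[of n] one_minus_qn_nz[of n]
    by (simp add: field_simps power_mult_distrib pow2) algebra
  show ?thesis unfolding H1_def H2_def by (rule tele_sum[OF sP1 sP2 _ a b]) (simp add: P1_def)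
qed

lemma identB:
  assumes y: "norm y \<le> norm q"
  shows "H2 q y - H1 q y = y * H1 q (y*q)"
proof -
  define P1 where "P1 n = (-1)^n * (y^2)^n * ((q^5)^tri n * (q^n)^1) * (1 - q^n) * Rr q (y*q^n) / qpoch q q n" for n
  define P2 where "P2 n = (-1)^n * (y^2)^n * ((q^5)^tri n * (q^n)^4) * y * Rr q (y*q^n*q) / qpoch q q n" for n
  note yf = y_facts[OF y]
  have yqn: "norm (y*q^n) \<le> norm q" for n using yf by blast
  have sP1: "summable P1" unfolding P1_def
    by (rule term_summable, rule term_bound) (use yf Zbound Zbound1 c2 Rr_bound in auto)
  have sP2: "summable P2" unfolding P2_def
    by (rule term_summable, rule term_bound) (use yf Zbound Rr_bound in auto)
  have r1: "Rr q (y*q*q^n) = Rr q (y*q^n*q)" for n by (simp add: mult_ac)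
  have r2: "Rr q (y*q^Suc n) = Rr q (y*q^n*q)" for n by (simp add: mult_ac)
  have a: "h2t q y n - h1t q y n = P1 n + P2 n" for n
    unfolding h1t_def h2t_def P1_def P2_def Rr_rel[OF yqn] by (simp add: field_simps qpoch_qq_nz) algebra
  have b: "y * h1t q (y*q) n = P2 n + P1 (Suc n)" for n
    unfolding h1t_def P1_def P2_def r1 r2 Rr_rel[OF yqn] tri_Suc power_add pow5 qpoch_Suc
    using qpoch_qq_nz[of n] one_minus_qn_nz[of n]
    by (simp add: field_simps power_mult_distrib pow2) algebra
  have yq: "norm (y*q) \<le> norm q" using yf(3)[of 0] by simp
  have "H2 q y - H1 q y = (\<Sum>n. h2t q y n - h1t q y n)"
    unfolding H1_def H2_def by (rule suminf_diff) (use sum_h1 sum_h2 y in auto)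
  also have "\<dots> = (\<Sum>n. y * h1t q (y*q) n)" by (rule tele_sum[OF sP1 sP2 _ a b]) (simp add: P1_def)
  also have "\<dots> = y * H1 q (y*q)" unfolding H1_def by (rule suminf_mult) (rule sum_h1[OF yq])
  finally show ?thesis .
qed

end

definition gt :: "complex \<Rightarrow> complex \<Rightarrow> nat \<Rightarrow> complex" where
  "gt q x n = x^n * q^(n^2) / qpoch q q n"
definition G where "G q x = suminf (gt q x)"
definition J where "J q x = H2 q (x*q)"

context
  fixes q :: complex
  assumes q: "norm q < 1"
begin

lemma qn_le: "norm q ^ (n^2) \<le> norm q ^ n"
proof -
  have "n \<le> n^2" by (simp add: power2_eq_square)
  then show ?thesis using q by (intro power_decreasing) auto
qed

lemma gt_bound: "norm x \<le> 1 \<Longrightarrow> norm (gt q x n) \<le> (1 / LL q) * norm q ^ n"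
proof -
  assume x: "norm x \<le> 1"
  have "norm (gt q x n) = norm x ^ n * norm q ^ (n^2) * norm (1 / qpoch q q n)"
    by (simp add: gt_def norm_mult norm_divide norm_power)
  also have "\<dots> \<le> 1 * norm q ^ n * (1 / LL q)"
    using x qn_le qinv_bound[OF q] LL_pos[OF q] by (intro mult_mono power_le_one) auto
  finally show ?thesis by simp
qed

lemma sum_g: "norm x \<le> 1 \<Longrightarrow> summable (gt q x)"
  by (rule geom_bound(1)[of _ "1 / LL q" "norm q"]) (use gt_bound q in auto)

lemma G_fe: assumes x: "norm x \<le> 1" shows "G q x = G q (x*q) + x*q * G q (x*q^2)"
proof -
  have xq: "norm (x*q) \<le> 1" using x q by (simp add: norm_mult mult_le_one)
  have xq2: "norm (x*q^2) \<le> 1" using x q by (simp add: norm_mult norm_power mult_le_one power_le_one)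
  have "G q x - G q (x*q) = (\<Sum>n. gt q x n - gt q (x*q) n)"
    unfolding G_def by (rule suminf_diff) (use sum_g x xq in auto)
  also have "\<dots> = (\<Sum>m. gt q x (Suc m) - gt q (x*q) (Suc m))"
  proof -
    have sd: "summable (\<lambda>n. gt q x n - gt q (x*q) n)" by (intro summable_diff sum_g x xq)
    show ?thesis by (subst suminf_split_head[OF sd]) (simp add: gt_def)
  qed
  also have "\<dots> = (\<Sum>m. x*q * gt q (x*q^2) m)"
  proof (rule suminf_cong)
    fix m
    have e: "(Suc m)^2 = m^2 + 2*m + 1" by (simp add: power2_eq_square)
    have e1: "(x*q)^Suc m = x^Suc m * (q*q^m)" by (simp add: power_mult_distrib)
    have nz: "1 - q*q^m \<noteq> 0" using one_minus_qn_nz[OF q, of m] .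
    have "gt q x (Suc m) - gt q (x*q) (Suc m) = (x^Suc m * q^((Suc m)^2) * (1 - q*q^m)) / (qpoch q q m * (1 - q*q^m))"
    proof -
      have n: "x^Suc m * q^((Suc m)^2) - x^Suc m * (q*q^m) * q^((Suc m)^2) = x^Suc m * q^((Suc m)^2) * (1 - q*q^m)"
        by (simp add: algebra_simps)
      show ?thesis unfolding gt_def qpoch_Suc e1 diff_divide_distrib[symmetric] n ..
    qed
    also have "\<dots> = x^Suc m * q^((Suc m)^2) / qpoch q q m" using nz by simp
    also have "\<dots> = x*q * gt q (x*q^2) m"
      unfolding gt_def e by (simp add: power_add power_mult power_mult_distrib mult_ac pow2)
    finally show "gt q x (Suc m) - gt q (x*q) (Suc m) = x*q * gt q (x*q^2) m" .
  qed
  also have "\<dots> = x*q * G q (x*q^2)" unfolding G_def by (rule suminf_mult) (rule sum_g[OF xq2])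
  finally show ?thesis by (simp add: algebra_simps)
qed

lemma J_fe: assumes x: "norm x \<le> 1" shows "J q x = J q (x*q) + x*q * J q (x*q^2)"
proof -
  have y: "norm (x*q) \<le> norm q" using x by (simp add: norm_mult mult_left_le_one_le)
  have y2: "norm (x*q*q) \<le> norm q" using x q by (simp add: norm_mult mult_le_one mult_left_le_one_le)
  have "J q x = H2 q (x*q)" by (simp add: J_def)
  also have "\<dots> = H1 q (x*q) + x*q * H1 q (x*q*q)" using identB[OF q y] by (simp add: algebra_simps)
  also have "H1 q (x*q) = J q (x*q)" unfolding J_def using identA[OF q y] .
  also have "H1 q (x*q*q) = J q (x*q^2)" unfolding J_def using identA[OF q y2]
    by (simp add: power2_eq_square mult_ac)
  finally show ?thesis .
qed

lemma G_bound: assumes x: "norm x \<le> 1" shows "norm (G q x - 1) \<le> norm x * (1 / LL q / (1 - norm q))"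
proof -
  have "G q x - 1 = (\<Sum>m. gt q x (Suc m))"
    unfolding G_def using suminf_split_head[OF sum_g[OF x]] by (simp add: gt_def)
  also have "norm \<dots> \<le> (norm x / LL q) / (1 - norm q)"
  proof (rule geom_bound(3))
    fix m
    have "norm (gt q x (Suc m)) = norm x ^ Suc m * norm q ^ ((Suc m)^2) * norm (1 / qpoch q q (Suc m))"
      by (simp add: gt_def norm_mult norm_divide norm_power)
    also have "\<dots> \<le> norm x * norm q ^ m * (1 / LL q)"
    proof (intro mult_mono)
      show "norm x ^ Suc m \<le> norm x" using x by (simp add: mult_left_le power_le_one)
      have "m \<le> (Suc m)^2" by (simp add: power2_eq_square)
      then show "norm q ^ ((Suc m)^2) \<le> norm q ^ m" using q by (intro power_decreasing) auto
      show "norm (1 / qpoch q q (Suc m)) \<le> 1 / LL q" by (rule qinv_bound[OF q])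
    qed auto
    finally show "norm (gt q x (Suc m)) \<le> (norm x / LL q) * norm q ^ m" by (simp add: field_simps)
  qed (use q in auto)
  finally show ?thesis by (simp add: field_simps)
qed

lemma h2t_bound: assumes y: "norm y \<le> norm q"
  shows "norm (h2t q y n) \<le> norm y ^ (2*n) * ((2 / (LL q)^2) * norm q ^ n)"
proof -
  note yf = y_facts[OF q y]
  have c: "norm (1 - y^2*(q^n)^4) \<le> 2"
  proof (rule c2[OF q])
    show "norm (y^2*(q^n)^4) \<le> 1" unfolding norm_mult norm_power
      using yf(1) q by (intro mult_le_one power_le_one) auto
  qed
  have "norm (h2t q y n) = norm y ^ (2*n) * norm ((q^5)^tri n * q^n) * norm (1 - y^2*(q^n)^4) * norm (Rr q (y*q^n)) * norm (1 / qpoch q q n)"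
    by (simp add: h2t_def norm_mult norm_divide norm_power power_mult)
  also have "\<dots> \<le> norm y ^ (2*n) * norm q ^ n * 2 * (1 / LL q) * (1 / LL q)"
    using Zbound1[OF q] c Rr_bound[OF q] yf qinv_bound[OF q] LL_pos[OF q]
    by (intro mult_mono) auto
  also have "\<dots> = norm y ^ (2*n) * ((2 / (LL q)^2) * norm q ^ n)" by (simp add: power2_eq_square)
  finally show ?thesis .
qed

definition "CJ = 1 / (LL q * (1 - norm q)) + 1 / LL q + 2 / ((LL q)^2 * (1 - norm q))"

lemma J_bound: assumes x: "norm x \<le> 1" shows "norm (J q x - 1) \<le> norm x * CJ"
proof -
  define y where "y = x*q"
  have yx: "norm y \<le> norm x" unfolding y_def norm_mult using q by (intro mult_left_le) auto
  have yq: "norm y \<le> norm q" using x by (simp add: y_def norm_mult mult_left_le_one_le)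
  have y1: "norm y < 1" using yq q by simp
  have L: "LL q > 0" by (rule LL_pos[OF q])
  have Jy: "J q x = suminf (h2t q y)" by (simp add: J_def H2_def y_def)
  have h0: "h2t q y 0 = (1 - y^2) * Rr q y" by (simp add: h2t_def)
  have "J q x - 1 = (h2t q y 0 - 1) + (\<Sum>m. h2t q y (Suc m))"
    unfolding Jy using suminf_split_head[OF sum_h2[OF q yq]] by simp
  also have "norm \<dots> \<le> (norm y / (LL q * (1 - norm q)) + norm y / LL q) + norm y * (2 / ((LL q)^2 * (1 - norm q)))"
  proof (rule order_trans[OF norm_triangle_ineq add_mono])
    have Rs: "(\<lambda>r. y^r / qpoch q q r) sums Rr q y" unfolding Rr_def by (rule euler1[OF q y1])
    have Rm1: "Rr q y - 1 = (\<Sum>m. y^Suc m / qpoch q q (Suc m))"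
      using suminf_split_head[OF sums_summable[OF Rs]] sums_unique[OF Rs] by simp
    have nR: "norm (Rr q y - 1) \<le> (norm y / LL q) / (1 - norm q)"
      unfolding Rm1
    proof (rule geom_bound(3))
      fix m
      have "norm (y^Suc m / qpoch q q (Suc m)) = norm y * norm y ^ m * norm (1 / qpoch q q (Suc m))"
        by (simp add: norm_mult norm_divide norm_power)
      also have "\<dots> \<le> norm y * norm q ^ m * (1 / LL q)"
        using yq qinv_bound[OF q] by (intro mult_mono power_mono) auto
      finally show "norm (y^Suc m / qpoch q q (Suc m)) \<le> (norm y / LL q) * norm q ^ m" by (simp add: field_simps)
    qed (use q in auto)
    have "h2t q y 0 - 1 = (Rr q y - 1) - y^2 * Rr q y" unfolding h0 by (simp add: algebra_simps)
    also have "norm \<dots> \<le> norm (Rr q y - 1) + norm (y^2 * Rr q y)" by (rule norm_triangle_ineq4)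
    also have "norm (y^2 * Rr q y) \<le> norm y * (1 / LL q)"
    proof -
      have "norm (y^2) = norm y * norm y" by (simp add: norm_mult power2_eq_square)
      also have "\<dots> \<le> norm y" using y1 by (intro mult_left_le) auto
      finally have "norm (y^2) \<le> norm y" .
      then show ?thesis unfolding norm_mult using Rr_bound[OF q yq] by (intro mult_mono) auto
    qed
    finally show "norm (h2t q y 0 - 1) \<le> norm y / (LL q * (1 - norm q)) + norm y / LL q"
      using nR by (simp add: field_simps)
    show "norm (\<Sum>m. h2t q y (Suc m)) \<le> norm y * (2 / ((LL q)^2 * (1 - norm q)))"
    proof -
      have "norm (\<Sum>m. h2t q y (Suc m)) \<le> (norm y * (2 / (LL q)^2)) / (1 - norm q)"
      proof (rule geom_bound(3))
        fix m
        have "norm (h2t q y (Suc m)) \<le> norm y ^ (2 * Suc m) * ((2 / (LL q)^2) * norm q ^ Suc m)"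
          by (rule h2t_bound[OF yq])
        also have "\<dots> \<le> norm y * ((2 / (LL q)^2) * norm q ^ m)"
        proof (rule mult_mono)
          have "norm y ^ (2 * Suc m) = norm y * norm y ^ (2*m+1)" by simp
          also have "\<dots> \<le> norm y" using y1 by (intro mult_left_le power_le_one) auto
          finally show "norm y ^ (2 * Suc m) \<le> norm y" .
          show "2 / (LL q)^2 * norm q ^ Suc m \<le> 2 / (LL q)^2 * norm q ^ m"
            using q L by (intro mult_left_mono power_decreasing) auto
        qed (use L in auto)
        finally show "norm (h2t q y (Suc m)) \<le> (norm y * (2 / (LL q)^2)) * norm q ^ m" by (simp add: mult_ac)
      qed (use q in auto)
      then show ?thesis by (simp add: field_simps)
    qed
  qed
  also have "\<dots> = norm y * CJ" unfolding CJ_def by (simp add: field_simps)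
  also have "\<dots> \<le> norm x * CJ"
  proof -
    have "CJ \<ge> 0" unfolding CJ_def using L q by (intro add_nonneg_nonneg) auto
    then show ?thesis using yx by (intro mult_right_mono) auto
  qed
  finally show ?thesis .
qed

lemma J_eq_G: assumes x: "norm x \<le> 1" shows "J q x = G q x"
proof -
  define D where "D z = J q z - G q z" for z
  have "D x = 0"
  proof (rule fe_unique[OF q, of D _ x])
    fix z :: complex assume z: "norm z \<le> 1"
    show "D z = D (z*q) + z*q * D (z*q^2)" unfolding D_def using J_fe[OF z] G_fe[OF z] by (simp add: algebra_simps)
    have "norm (D z) \<le> norm (J q z - 1) + norm (G q z - 1)"
      unfolding D_def using norm_triangle_ineq4[of "J q z - 1" "G q z - 1"] by simp
    also have "\<dots> \<le> norm z * CJ + norm z * (1 / LL q / (1 - norm q))"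
      by (intro add_mono J_bound G_bound z)
    finally show "norm (D z) \<le> (CJ + 1 / LL q / (1 - norm q)) * norm z" by (simp add: algebra_simps)
  qed (rule x)
  then show ?thesis unfolding D_def by simp
qed

end

lemma qpoch5: "qpoch a q 5 = (1 - a) * (1 - a*q) * (1 - a*q^2) * (1 - a*q^3) * (1 - a*q^4)"
  by (simp add: qpoch_def numeral_eq_Suc lessThan_Suc power_Suc)

lemma dissect_fin:
  "qpoch q q (5*N) = qpoch q (q^5) N * qpoch (q^2) (q^5) N * qpoch (q^3) (q^5) N * qpoch (q^4) (q^5) N * qpoch (q^5) (q^5) N"
proof (induction N)
  case 0 then show ?case by simp
next
  case (Suc N)
  have "qpoch q q (5 * Suc N) = qpoch q q (5*N) * qpoch (q*q^(5*N)) q 5"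
    using qpoch_add[of q q "5*N" 5] by (simp add: add.commute)
  also have "qpoch (q*q^(5*N)) q 5 = (1 - q*q^(5*N)) * (1 - q^2*q^(5*N)) * (1 - q^3*q^(5*N)) * (1 - q^4*q^(5*N)) * (1 - q^5*q^(5*N))"
  proof -
    have e: "q*X*q = q^2*X" "q*X*q^2 = q^3*X" "q*X*q^3 = q^4*X" "q*X*q^4 = q^5*X" for X :: complex
      by algebra+
    show ?thesis unfolding qpoch5 e by (simp only: mult.assoc)
  qed
  finally have "qpoch q q (5 * Suc N) = qpoch q q (5*N) * ((1 - q*q^(5*N)) * (1 - q^2*q^(5*N)) * (1 - q^3*q^(5*N)) * (1 - q^4*q^(5*N)) * (1 - q^5*q^(5*N)))"
    by (simp only: mult.assoc)
  moreover have X: "(q^5)^N = q^(5*N)" by (simp add: power_mult)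
  ultimately show ?case unfolding qpoch_Suc X Suc.IH by (simp only: mult_ac)
qed

lemma dissect:
  fixes q :: complex assumes q: "norm q < 1"
  shows "qpoch_inf q q = qpoch_inf q (q^5) * qpoch_inf (q^2) (q^5) * qpoch_inf (q^3) (q^5) * qpoch_inf (q^4) (q^5) * qpoch_inf (q^5) (q^5)"
proof -
  have q5: "norm (q^5) < 1" using q by (simp add: norm_power power_less_one_iff)
  have "(\<lambda>N. qpoch q q (5*N)) \<longlonglongrightarrow> qpoch_inf q q"
  proof -
    have "strict_mono (\<lambda>N::nat. 5*N)" by (auto simp: strict_mono_def)
    from LIMSEQ_subseq_LIMSEQ[OF qpoch_LIMSEQ[OF q] this] show ?thesis by (simp add: o_def)
  qed
  moreover have "(\<lambda>N. qpoch q q (5*N)) \<longlonglongrightarrow> qpoch_inf q (q^5) * qpoch_inf (q^2) (q^5) * qpoch_inf (q^3) (q^5) * qpoch_inf (q^4) (q^5) * qpoch_inf (q^5) (q^5)"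
    unfolding dissect_fin by (intro tendsto_mult qpoch_LIMSEQ[OF q5])
  ultimately show ?thesis using LIMSEQ_unique by blast
qed

lemma combine:
  fixes a b c d :: "nat \<Rightarrow> complex"
  assumes "summable a" "summable c" "\<And>u. d u = a (Suc u)" "\<And>n. b n = - c (Suc n)" "a 0 = 1" "c 0 = 1"
  shows "suminf a - suminf b = suminf c + suminf d" "summable b" "summable d"
proof -
  have sa: "summable (\<lambda>u. a (Suc u))" using assms(1) by (simp add: summable_Suc_iff)
  have sc: "summable (\<lambda>n. c (Suc n))" using assms(2) by (simp add: summable_Suc_iff)
  have d: "d = (\<lambda>u. a (Suc u))" using assms(3) by auto
  have b: "b = (\<lambda>n. - c (Suc n))" using assms(4) by auto
  show "summable b" unfolding b using summable_minus[OF sc] .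
  show "summable d" unfolding d using sa .
  have "suminf d = suminf a - 1" unfolding d using suminf_split_head[OF assms(1)] assms(5) by simp
  moreover have "suminf b = - (suminf c - 1)" unfolding b using suminf_split_head[OF assms(2)] assms(6)
    suminf_minus[OF sc] by simp
  ultimately show "suminf a - suminf b = suminf c + suminf d" by simp
qed

lemma jtp_halves:
  fixes p z :: complex and c d :: "nat \<Rightarrow> complex"
  assumes p: "norm p < 1" "p \<noteq> 0" and z: "z \<noteq> 0" "norm z \<le> 1" and pz: "norm p < norm z"
    and sc: "summable (\<lambda>n. norm (c n))" and sd: "summable (\<lambda>n. norm (d n))"
    and ec: "\<And>n. thc p z (int n) = c n" and ed: "\<And>u. thc p z (- int u - 1) = d u"
  shows "suminf c + suminf d = qpoch_inf z p * qpoch_inf (p/z) p * qpoch_inf p p"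
proof -
  have hc: "((\<lambda>n. thc p z (int n)) has_sum suminf c) UNIV"
    unfolding ec by (rule norm_summable_imp_has_sum[OF sc summable_sums[OF summable_norm_cancel[OF sc]]])
  have hd: "((\<lambda>u. thc p z (- int u - 1)) has_sum suminf d) UNIV"
    unfolding ed by (rule norm_summable_imp_has_sum[OF sd summable_sums[OF summable_norm_cancel[OF sd]]])
  have "(thc p z has_sum (suminf c + suminf d)) UNIV" by (rule has_sum_int_split[OF hc hd])
  moreover have "(thc p z has_sum (qpoch_inf z p * qpoch_inf (p/z) p * qpoch_inf p p)) UNIV"
    by (rule jtp[OF p z pz])
  ultimately show ?thesis using has_sum_unique by blast
qed

lemma div_pow_cancel: "(x::complex) \<noteq> 0 \<Longrightarrow> (x^5)^k / (x^2)^k = (x^k)^3" "(x::complex) \<noteq> 0 \<Longrightarrow> (x^5)^k / x^k = (x^k)^4"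
proof -
  assume x: "x \<noteq> 0"
  define X where "X = x^k"
  have nz: "X \<noteq> 0" using x by (simp add: X_def)
  have e1: "X^5 = X^3 * X^2" by (simp flip: power_add)
  have e2: "X^5 = X^4 * X" by (simp flip: power_Suc2)
  have "(x^5)^k / (x^2)^k = X^5 / X^2" by (simp add: pow5 pow2 X_def)
  also have "\<dots> = X^3 * X^2 / X^2" by (simp only: e1)
  also have "\<dots> = X^3" by (rule nonzero_mult_div_cancel_right) (simp add: nz)
  finally show "(x^5)^k / (x^2)^k = (x^k)^3" by (simp add: X_def)
  have "(x^5)^k / x^k = X^5 / X" by (simp add: pow5 X_def)
  also have "\<dots> = X^4 * X / X" by (simp only: e2)
  also have "\<dots> = X^4" by (rule nonzero_mult_div_cancel_right) (simp add: nz)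
  finally show "(x^5)^k / x^k = (x^k)^4" by (simp add: X_def)
qed

lemma Qinf_facts:
  fixes q :: complex assumes q: "norm q < 1"
  shows "qpoch_inf q q \<noteq> 0" "Rr q (q*q^n) = qpoch q q n / qpoch_inf q q"
proof -
  have L: "lbq (norm q) (norm q) > 0" using lbq_pos[OF q] .
  have "norm (qpoch_inf q q) \<ge> lbq (norm q) (norm q)" using q by (intro qpoch_inf_norm_lb) auto
  then show nz: "qpoch_inf q q \<noteq> 0" using L by auto
  have e: "qpoch_inf q q = qpoch q q n * qpoch_inf (q*q^n) q" by (rule qpoch_inf_split[OF q])
  show "Rr q (q*q^n) = qpoch q q n / qpoch_inf q q"
    unfolding Rr_def using nz e qpoch_qq_nz[OF q, of n] by (simp add: field_simps)
qed

theorem RR1: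
  fixes q :: complex assumes q: "norm q < 1" "q \<noteq> 0"
  shows "(\<lambda>n. q^(n^2) / qpoch q q n) sums (1 / (qpoch_inf q (q^5) * qpoch_inf (q^4) (q^5)))"
proof -
  define Qi where "Qi = qpoch_inf q q"
  have Qnz: "Qi \<noteq> 0" unfolding Qi_def by (rule Qinf_facts(1)[OF q(1)])
  define a where "a n = (-1)^n * ((q^5)^tri n * (q^n)^3)" for n
  define b where "b n = (-1)^n * ((q^5)^tri n * (q^n)^7 * q^2)" for n
  define c where "c n = (-1)^n * (q^5)^tri n * (q^2)^n" for n
  define d where "d u = (-1)^Suc u * (q^5)^(tri (Suc u) + Suc u) / (q^2)^Suc u" for u
  have na: "summable (\<lambda>n. norm (a n))"
  proof (rule geom_bound(2)[of _ 1 "norm q"])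
    fix n show "norm (a n) \<le> 1 * norm q ^ n" unfolding a_def using Zbound[OF q(1), of 3 n] by (simp add: norm_mult norm_power)
  qed (use q in auto)
  have nc: "summable (\<lambda>n. norm (c n))"
  proof (rule geom_bound(2)[of _ 1 "norm q"])
    fix n show "norm (c n) \<le> 1 * norm q ^ n" unfolding c_def using Zbound[OF q(1), of 2 n] by (simp add: norm_mult norm_power pow2)
  qed (use q in auto)
  have da: "d u = a (Suc u)" for u
  proof -
    have "d u = (-1)^Suc u * (q^5)^tri (Suc u) * ((q^5)^Suc u / (q^2)^Suc u)"
      unfolding d_def by (simp add: power_add)
    also have "(q^5)^Suc u / (q^2)^Suc u = (q^Suc u)^3" by (rule div_pow_cancel(1)[OF q(2)])
    finally show ?thesis unfolding a_def by simp
  qed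
  have bc: "b n = - c (Suc n)" for n
    unfolding b_def c_def tri_Suc power_add pow5 pow2 by (simp add: power_mult_distrib; algebra)
  have JTP: "suminf c + suminf d = qpoch_inf (q^2) (q^5) * qpoch_inf (q^5/q^2) (q^5) * qpoch_inf (q^5) (q^5)"
  proof (rule jtp_halves)
    show "norm (q^5) < 1" "q^5 \<noteq> 0" "q^2 \<noteq> 0" "norm (q^2) \<le> 1" using q by (auto simp: norm_power power_le_one power_less_one_iff)
    show "norm (q^5) < norm (q^2)" using q by (simp add: norm_power power_strict_decreasing)
    show "summable (\<lambda>n. norm (c n))" by (rule nc)
    show "summable (\<lambda>n. norm (d n))" unfolding da using na summable_Suc_iff[of "\<lambda>n. norm (a n)"] by simp
    show "thc (q^5) (q^2) (int n) = c n" for n unfolding c_def thc_nat ..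
    show "thc (q^5) (q^2) (- int u - 1) = d u" for u unfolding d_def thc_neg ..
  qed
  have a0: "a 0 = 1" by (simp add: a_def)
  have c0: "c 0 = 1" by (simp add: c_def)
  note comb = combine[OF summable_norm_cancel[OF na] summable_norm_cancel[OF nc] da bc a0 c0]
  have h: "h2t q q n = (a n - b n) / Qi" for n
  proof -
    have "h2t q q n = (-1)^n * (q^2)^n * ((q^5)^tri n * q^n) * (1 - q^2*(q^n)^4) * (Rr q (q*q^n) / qpoch q q n)"
      by (simp add: h2t_def)
    also have "Rr q (q*q^n) / qpoch q q n = 1 / Qi"
      unfolding Qinf_facts(2)[OF q(1)] Qi_def using qpoch_qq_nz[OF q(1), of n] by simp
    finally have hh: "h2t q q n = (-1)^n * (q^2)^n * ((q^5)^tri n * q^n) * (1 - q^2*(q^n)^4) * (1 / Qi)" .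
    have ab: "s * X^2 * (T * X) * (1 - q^2 * X^4) = s * (T * X^3) - s * (T * X^7 * q^2)" for s X T :: complex
      by algebra
    show ?thesis unfolding hh a_def b_def pow2 ab[of "(-1)^n" "q^n" "(q^5)^tri n"] by simp
  qed
  have "G q 1 = J q 1" using J_eq_G[OF q(1), of 1] by simp
  also have "J q 1 = suminf (\<lambda>n. (a n - b n) / Qi)" unfolding J_def H2_def h[symmetric] by simp
  also have "\<dots> = (suminf a - suminf b) / Qi"
    using suminf_divide[OF summable_diff[OF summable_norm_cancel[OF na] comb(2)], of Qi]
      suminf_diff[OF summable_norm_cancel[OF na] comb(2)] by simp
  also have "\<dots> = qpoch_inf (q^2) (q^5) * qpoch_inf (q^3) (q^5) * qpoch_inf (q^5) (q^5) / Qi"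
  proof -
    have "q^5 / q^2 = q^3 * q^2 / q^2" by (simp flip: power_add)
    also have "\<dots> = q^3" by (rule nonzero_mult_div_cancel_right) (simp add: q(2))
    finally have "q^5 / q^2 = q^3" .
    then show ?thesis unfolding comb(1) JTP by simp
  qed
  also have "\<dots> = 1 / (qpoch_inf q (q^5) * qpoch_inf (q^4) (q^5))"
  proof -
    have Qd: "Qi = qpoch_inf q (q^5) * qpoch_inf (q^2) (q^5) * qpoch_inf (q^3) (q^5) * qpoch_inf (q^4) (q^5) * qpoch_inf (q^5) (q^5)"
      unfolding Qi_def by (rule dissect[OF q(1)])
    show ?thesis using Qnz unfolding Qd by (simp add: field_simps)
  qed
  finally have "G q 1 = 1 / (qpoch_inf q (q^5) * qpoch_inf (q^4) (q^5))" .
  moreover have "gt q 1 sums G q 1" unfolding G_def by (rule summable_sums[OF sum_g[OF q(1)]]) simp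
  ultimately show ?thesis by (simp add: gt_def[abs_def])
qed


theorem RR2:
  fixes q :: complex assumes q: "norm q < 1" "q \<noteq> 0"
  shows "(\<lambda>n. q^(n^2+n) / qpoch q q n) sums (1 / (qpoch_inf (q^2) (q^5) * qpoch_inf (q^3) (q^5)))"
proof -
  define Qi where "Qi = qpoch_inf q q"
  have Qnz: "Qi \<noteq> 0" unfolding Qi_def by (rule Qinf_facts(1)[OF q(1)])
  define a where "a n = (-1)^n * ((q^5)^tri n * (q^n)^4)" for n
  define b where "b n = (-1)^n * ((q^5)^tri n * (q^n)^6 * q)" for n
  define c where "c n = (-1)^n * (q^5)^tri n * q^n" for n
  define d where "d u = (-1)^Suc u * (q^5)^(tri (Suc u) + Suc u) / q^Suc u" for u
  have na: "summable (\<lambda>n. norm (a n))"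
  proof (rule geom_bound(2)[of _ 1 "norm q"])
    fix n show "norm (a n) \<le> 1 * norm q ^ n" unfolding a_def using Zbound[OF q(1), of 4 n] by (simp add: norm_mult norm_power)
  qed (use q in auto)
  have nc: "summable (\<lambda>n. norm (c n))"
  proof (rule geom_bound(2)[of _ 1 "norm q"])
    fix n show "norm (c n) \<le> 1 * norm q ^ n" unfolding c_def using Zbound1[OF q(1), of n] by (simp add: norm_mult norm_power)
  qed (use q in auto)
  have da: "d u = a (Suc u)" for u
  proof -
    have "d u = (-1)^Suc u * (q^5)^tri (Suc u) * ((q^5)^Suc u / q^Suc u)"
      unfolding d_def by (simp add: power_add)
    also have "(q^5)^Suc u / q^Suc u = (q^Suc u)^4" by (rule div_pow_cancel(2)[OF q(2)])
    finally show ?thesis unfolding a_def by simp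
  qed
  have bc: "b n = - c (Suc n)" for n
    unfolding b_def c_def tri_Suc power_add pow5 pow2 by (simp add: power_mult_distrib; algebra)
  have JTP: "suminf c + suminf d = qpoch_inf q (q^5) * qpoch_inf (q^5/q) (q^5) * qpoch_inf (q^5) (q^5)"
  proof (rule jtp_halves)
    show "norm (q^5) < 1" "q^5 \<noteq> 0" "q \<noteq> 0" "norm q \<le> 1" using q by (auto simp: norm_power power_le_one power_less_one_iff)
    show "norm (q^5) < norm q" using q power_strict_decreasing[of 1 5 "norm q"] by (simp add: norm_power)
    show "summable (\<lambda>n. norm (c n))" by (rule nc)
    show "summable (\<lambda>n. norm (d n))" unfolding da using na summable_Suc_iff[of "\<lambda>n. norm (a n)"] by simp
    show "thc (q^5) q (int n) = c n" for n unfolding c_def thc_nat ..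
    show "thc (q^5) q (- int u - 1) = d u" for u unfolding d_def thc_neg ..
  qed
  have a0: "a 0 = 1" by (simp add: a_def)
  have c0: "c 0 = 1" by (simp add: c_def)
  note comb = combine[OF summable_norm_cancel[OF na] summable_norm_cancel[OF nc] da bc a0 c0]
  have h: "h1t q q n = (a n - b n) / Qi" for n
  proof -
    have "h1t q q n = (-1)^n * (q^2)^n * ((q^5)^tri n * (q^n)^2) * (1 - q*(q^n)^2) * (Rr q (q*q^n) / qpoch q q n)"
      by (simp add: h1t_def)
    also have "Rr q (q*q^n) / qpoch q q n = 1 / Qi"
      unfolding Qinf_facts(2)[OF q(1)] Qi_def using qpoch_qq_nz[OF q(1), of n] by simp
    finally have hh: "h1t q q n = (-1)^n * (q^2)^n * ((q^5)^tri n * (q^n)^2) * (1 - q*(q^n)^2) * (1 / Qi)" .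
    have ab: "s * X^2 * (T * X^2) * (1 - q * X^2) = s * (T * X^4) - s * (T * X^6 * q)" for s X T :: complex
      by algebra
    show ?thesis unfolding hh a_def b_def pow2 ab[of "(-1)^n" "q^n" "(q^5)^tri n"] by simp
  qed
  have "G q q = J q q" using J_eq_G[OF q(1), of q] q(1) by simp
  also have "J q q = H1 q q" unfolding J_def using identA[OF q(1), of q] by simp
  also have "H1 q q = suminf (\<lambda>n. (a n - b n) / Qi)" unfolding H1_def h[symmetric] by simp
  also have "\<dots> = (suminf a - suminf b) / Qi"
    using suminf_divide[OF summable_diff[OF summable_norm_cancel[OF na] comb(2)], of Qi]
      suminf_diff[OF summable_norm_cancel[OF na] comb(2)] by simp
  also have "\<dots> = qpoch_inf q (q^5) * qpoch_inf (q^4) (q^5) * qpoch_inf (q^5) (q^5) / Qi"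
  proof -
    have "q^5 / q = q^4 * q / q" by (simp flip: power_Suc2)
    also have "\<dots> = q^4" by (rule nonzero_mult_div_cancel_right) (simp add: q(2))
    finally have "q^5 / q = q^4" .
    then show ?thesis unfolding comb(1) JTP by simp
  qed
  also have "\<dots> = 1 / (qpoch_inf (q^2) (q^5) * qpoch_inf (q^3) (q^5))"
  proof -
    have Qd: "Qi = qpoch_inf q (q^5) * qpoch_inf (q^2) (q^5) * qpoch_inf (q^3) (q^5) * qpoch_inf (q^4) (q^5) * qpoch_inf (q^5) (q^5)"
      unfolding Qi_def by (rule dissect[OF q(1)])
    show ?thesis using Qnz unfolding Qd by (simp add: field_simps)
  qed
  finally have "G q q = 1 / (qpoch_inf (q^2) (q^5) * qpoch_inf (q^3) (q^5))" .
  moreover have "gt q q sums G q q" unfolding G_def by (rule summable_sums[OF sum_g[OF q(1)]]) (use q in simp)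
  ultimately show ?thesis by (simp add: gt_def[abs_def] power_add mult.commute)
qed

lemma fin_ident:
  fixes q :: complex
  assumes q: "norm q < 1"
  shows "(\<Sum>j\<le>n div 2. q^tri (n - 2*j) / (qpoch q q (n - 2*j) * qpoch (q^2) (q^2) j)) = 1 / qpoch q q n"
proof -
  have q2: "norm (q^2) < 1" using q by (simp add: norm_power power_less_one_iff)
  define S where "S F = Abs_fps (\<lambda>n. q^n * fps_nth (F) n)" for F :: "complex fps"
  have S_nth: "fps_nth (S F) n = q^n * fps_nth (F) n" for F n by (simp add: S_def)
  have S_mult: "S (F * G) = S F * S G" for F G
  proof (rule fps_ext)
    fix n
    have "fps_nth (S (F * G)) n = (\<Sum>i=0..n. q^n * (fps_nth (F) i * fps_nth (G) (n - i)))"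
      by (simp add: S_nth fps_mult_nth sum_distrib_left)
    also have "\<dots> = (\<Sum>i=0..n. (q^i * fps_nth (F) i) * (q^(n-i) * fps_nth (G) (n - i)))"
    proof (rule sum.cong)
      fix i assume "i \<in> {0..n}"
      then have "q^n = q^i * q^(n-i)" by (simp flip: power_add)
      then show "q^n * (fps_nth (F) i * fps_nth (G) (n - i)) = (q^i * fps_nth (F) i) * (q^(n-i) * fps_nth (G) (n - i))" by (simp add: mult_ac)
    qed simp
    also have "\<dots> = fps_nth ((S F * S G)) n" by (simp add: S_nth fps_mult_nth)
    finally show "fps_nth (S (F * G)) n = fps_nth ((S F * S G)) n" .
  qed
  define A where "A = Abs_fps (\<lambda>i. q^tri i / qpoch q q i)"
  define B where "B = Abs_fps (\<lambda>k. if even k then 1 / qpoch (q^2) (q^2) (k div 2) else 0)"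
  have hA: "A = (1 + fps_X) * S A"
  proof (rule fps_ext)
    fix n
    show "fps_nth (A) n = fps_nth (((1 + fps_X) * S A)) n"
    proof (cases n)
      case 0 then show ?thesis by (simp add: A_def S_def distrib_right)
    next
      case (Suc m)
      have nz: "1 - q * q^m \<noteq> 0" by (rule one_minus_qn_nz[OF q])
      have nz2: "qpoch q q m \<noteq> 0" by (rule qpoch_qq_nz[OF q])
      have "q^tri (Suc m) / qpoch q q (Suc m) = q^Suc m * (q^tri (Suc m) / qpoch q q (Suc m)) + q^m * (q^tri m / qpoch q q m)"
        unfolding qpoch_Suc tri_Suc using nz nz2 by (simp add: field_simps power_add)
      then show ?thesis using Suc by (simp add: A_def S_def distrib_right)
    qed
  qed
  have hB: "(1 - fps_X^2) * B = S B"
  proof (rule fps_ext)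
    fix n
    have e: "fps_nth (((1 - fps_X^2) * B)) n = fps_nth (B) n - (if n < 2 then 0 else fps_nth (B) (n - 2))"
      by (simp add: left_diff_distrib fps_X_power_mult_nth)
    show "fps_nth (((1 - fps_X^2) * B)) n = fps_nth (S B) n"
    proof (cases "n < 2")
      case True
      then have "n = 0 \<or> n = 1" by auto
      then show ?thesis unfolding e by (auto simp: B_def S_nth)
    next
      case False
      then obtain m where m: "n = Suc (Suc m)" by (metis add_2_eq_Suc le_Suc_ex not_less)
      show ?thesis
      proof (cases "even m")
        case True
        then obtain j where j: "m = 2*j" by (auto elim: evenE)
        have nz: "1 - q^2 * (q^2)^j \<noteq> 0" by (rule one_minus_pow_nz[OF q2])
        have nz2: "qpoch (q^2) (q^2) j \<noteq> 0" by (rule qpoch_pp_nz[OF q2])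
        have d: "Suc (Suc (2*j)) div 2 = Suc j" by simp
        have qq: "q^Suc (Suc (2*j)) = q^2 * (q^2)^j" by (simp add: power_mult power2_eq_square)
        have b1: "fps_nth B n = 1 / (qpoch (q^2) (q^2) j * (1 - q^2*(q^2)^j))"
          unfolding m j by (simp add: B_def d qpoch_Suc)
        have b0: "fps_nth B (n - 2) = 1 / qpoch (q^2) (q^2) j"
          unfolding m j by (simp add: B_def)
        have ab: "1/(Q*(1-R)) - 1/Q = R * (1/(Q*(1-R)))" if "Q \<noteq> 0" "1 - R \<noteq> 0" for Q R :: complex
          using that by (simp add: field_simps)
        have qn: "q^n = q^2*(q^2)^j" unfolding m j by (rule qq)
        show ?thesis unfolding e S_nth b1 b0 qn using m ab[OF nz2 nz] by simp
      next
        case False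
        then show ?thesis unfolding e using m by (simp add: B_def S_nth)
      qed
    qed
  qed
  define C where "C = B * A"
  have hC: "(1 - fps_X) * C = S C"
  proof -
    have C': "C = B * ((1 + fps_X) * S A)" unfolding C_def by (rule arg_cong[OF hA])
    have "(1 - fps_X) * C = S A * ((1 - fps_X) * (1 + fps_X) * B)"
      unfolding C' by (simp add: mult_ac)
    also have "(1 - fps_X) * (1 + fps_X) = (1 - fps_X^2 :: complex fps)"
      by (simp add: algebra_simps power2_eq_square)
    also have "S A * ((1 - fps_X^2) * B) = S C" unfolding hB C_def S_mult by (simp add: mult_ac)
    finally show ?thesis .
  qed
  have Crec: "fps_nth (C) (Suc m) - fps_nth (C) m = q^Suc m * fps_nth (C) (Suc m)" for m
  proof -
    have "fps_nth (((1 - fps_X) * C)) (Suc m) = fps_nth (S C) (Suc m)" using hC by simp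
    then show ?thesis by (simp add: left_diff_distrib S_nth)
  qed
  have C0: "fps_nth (C) 0 = 1" by (simp add: C_def A_def B_def)
  have Cq: "fps_nth (C) n * qpoch q q n = 1" for n
  proof (induction n)
    case 0 then show ?case using C0 by simp
  next
    case (Suc m)
    have "fps_nth (C) (Suc m) * qpoch q q (Suc m) = (fps_nth (C) (Suc m) - q^Suc m * fps_nth (C) (Suc m)) * qpoch q q m"
      by (simp add: qpoch_Suc algebra_simps)
    also have "fps_nth (C) (Suc m) - q^Suc m * fps_nth (C) (Suc m) = fps_nth (C) m"
      using Crec[of m] by (simp add: algebra_simps)
    then have "(fps_nth (C) (Suc m) - q^Suc m * fps_nth (C) (Suc m)) * qpoch q q m = fps_nth (C) m * qpoch q q m"
      by simp
    finally show ?case using Suc by simp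
  qed
  have Cn: "fps_nth (C) n = 1 / qpoch q q n" using Cq[of n] qpoch_qq_nz[OF q, of n] by (simp add: field_simps)
  define g where "g k = fps_nth (B) k * fps_nth (A) (n - k)" for k
  have "fps_nth (C) n = (\<Sum>k=0..n. g k)" unfolding C_def g_def by (simp add: fps_mult_nth)
  also have "\<dots> = (\<Sum>k\<in>(\<lambda>j. 2*j) ` {..n div 2}. g k)"
  proof (rule sum.mono_neutral_right)
    show "(\<lambda>j. 2*j) ` {..n div 2} \<subseteq> {0..n}" by auto
    show "\<forall>k\<in>{0..n} - (\<lambda>j. 2*j) ` {..n div 2}. g k = 0"
    proof
      fix k assume k: "k \<in> {0..n} - (\<lambda>j. 2*j) ` {..n div 2}"
      have "odd k"
      proof
        assume "even k"
        then obtain j where "k = 2*j" by (auto elim: evenE)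
        moreover have "j \<le> n div 2" using k \<open>k = 2*j\<close> by auto
        ultimately show False using k by auto
      qed
      then show "g k = 0" by (simp add: g_def B_def)
    qed
  qed auto
  also have "\<dots> = (\<Sum>j\<le>n div 2. g (2*j))"
    by (subst sum.reindex) (auto simp: inj_on_def)
  also have "\<dots> = (\<Sum>j\<le>n div 2. q^tri (n - 2*j) / (qpoch q q (n - 2*j) * qpoch (q^2) (q^2) j))"
    by (rule sum.cong) (auto simp: g_def A_def B_def)
  finally show ?thesis using Cn by simp
qed

lemma rearr:
  fixes q :: complex and E :: "nat \<Rightarrow> complex" and S :: complex
  assumes q: "norm q < 1" and E: "\<And>n. norm (E n) \<le> norm q ^ n" and S: "(\<lambda>n. E n / qpoch q q n) sums S"
  shows "((\<lambda>(i,j). E (i + 2*j) * (q^tri i / (qpoch q q i * qpoch (q^2) (q^2) j))) has_sum S) UNIV"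
proof -
  have q2: "norm (q^2) < 1" using q by (simp add: norm_power power_less_one_iff)
  define L where "L = lbq (norm q) (norm q)"
  define L2 where "L2 = lbq (norm (q^2)) (norm (q^2))"
  have L: "L > 0" unfolding L_def by (rule lbq_pos[OF q])
  have L2: "L2 > 0" unfolding L2_def by (rule lbq_pos[OF q2])
  define f where "f = (\<lambda>(i,j). E (i + 2*j) * (q^tri i / (qpoch q q i * qpoch (q^2) (q^2) j)))"
  have bound: "norm (f xy) \<le> (1/(L*L2)) * norm (q^fst xy * q^snd xy)" for xy
  proof -
    obtain i j where xy: "xy = (i,j)" by force
    have "norm (f xy) = norm (E (i + 2*j)) * norm q ^ tri i * norm (1 / qpoch q q i) * norm (1 / qpoch (q^2) (q^2) j)"
      unfolding xy f_def by (simp add: norm_mult norm_divide norm_power)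
    also have "\<dots> \<le> norm q ^ (i + j) * 1 * (1/L) * (1/L2)"
    proof (intro mult_mono)
      have "norm (E (i + 2*j)) \<le> norm q ^ (i + 2*j)" by (rule E)
      also have "\<dots> \<le> norm q ^ (i + j)" using q by (intro power_decreasing) auto
      finally show "norm (E (i + 2*j)) \<le> norm q ^ (i + j)" .
      show "norm q ^ tri i \<le> 1" using q by (intro power_le_one) auto
      show "norm (1 / qpoch q q i) \<le> 1/L" unfolding L_def by (rule qpoch_pp_inv_bound[OF q])
      show "norm (1 / qpoch (q^2) (q^2) j) \<le> 1/L2" unfolding L2_def by (rule qpoch_pp_inv_bound[OF q2])
    qed (use L L2 in auto)
    also have "\<dots> = (1/(L*L2)) * norm (q^fst xy * q^snd xy)"
      unfolding xy by (simp add: norm_mult norm_power power_add field_simps)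
    finally show ?thesis .
  qed
  have geo: "(\<lambda>i. norm (q^i)) summable_on UNIV"
  proof -
    have "summable (\<lambda>i. norm (q^i))" using q by (simp add: norm_power summable_geometric)
    then show ?thesis using real_summable_has_sum[of "\<lambda>i. norm (q^i)"] summable_on_def by auto
  qed
  have pr: "(\<lambda>xy. norm (q^fst xy * q^snd xy)) summable_on (UNIV \<times> UNIV)"
    by (rule abs_summable_times[OF geo geo])
  have "(\<lambda>xy. norm (f xy)) summable_on (UNIV \<times> UNIV)"
  proof (rule Infinite_Sum.abs_summable_on_comparison_test')
    show "(\<lambda>xy. (1/(L*L2)) * norm (q^fst xy * q^snd xy)) summable_on (UNIV \<times> UNIV)"
      by (rule summable_on_cmult_right[OF pr])
    show "norm (f xy) \<le> (1/(L*L2)) * norm (q^fst xy * q^snd xy)" for xy by (rule bound)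
  qed
  then have "f summable_on (UNIV \<times> UNIV)" by (rule abs_summable_summable)
  then obtain T where T: "(f has_sum T) (UNIV \<times> UNIV)" unfolding summable_on_def by blast
  define V where "V nj = f (fst nj - 2 * snd nj, snd nj)" for nj
  have T2: "(V has_sum T) (Sigma UNIV (\<lambda>n. {..n div 2}))"
  proof -
    have "(V has_sum T) (Sigma UNIV (\<lambda>n. {..n div 2})) \<longleftrightarrow> (f has_sum T) (UNIV \<times> UNIV)"
      by (rule has_sum_reindex_bij_witness[where i="\<lambda>(i,j). (i + 2*j, j)" and j="\<lambda>(n,j). (n - 2*j, j)"])
         (auto simp: V_def)
    then show ?thesis using T by simp
  qed
  have T3: "((\<lambda>n. \<Sum>j\<le>n div 2. V (n,j)) has_sum T) UNIV"
  proof (rule has_sum_Sigma'[OF T2])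
    fix n :: nat
    show "((\<lambda>j. V (n, j)) has_sum (\<Sum>j\<le>n div 2. V (n,j))) {..n div 2}" by (rule has_sum_finite) simp
  qed
  have fib: "(\<Sum>j\<le>n div 2. V (n,j)) = E n / qpoch q q n" for n
  proof -
    have "(\<Sum>j\<le>n div 2. V (n,j)) = (\<Sum>j\<le>n div 2. E n * (q^tri (n - 2*j) / (qpoch q q (n - 2*j) * qpoch (q^2) (q^2) j)))"
      by (rule sum.cong) (auto simp: V_def f_def)
    also have "\<dots> = E n * (\<Sum>j\<le>n div 2. q^tri (n - 2*j) / (qpoch q q (n - 2*j) * qpoch (q^2) (q^2) j))"
      by (rule sum_distrib_left[symmetric])
    also have "\<dots> = E n * (1 / qpoch q q n)" by (simp only: fin_ident[OF q])
    finally show ?thesis by simp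
  qed
  have T4: "((\<lambda>n. E n / qpoch q q n) has_sum T) UNIV" using T3 unfolding fib .
  have S4: "((\<lambda>n. E n / qpoch q q n) has_sum S) UNIV"
  proof (rule norm_summable_imp_has_sum[OF _ S])
    show "summable (\<lambda>n. norm (E n / qpoch q q n))"
    proof (rule geom_bound(2)[of _ "1/L" "norm q"])
      fix n
      have "norm (E n / qpoch q q n) = norm (E n) * norm (1 / qpoch q q n)" by (simp add: norm_divide)
      also have "\<dots> \<le> norm q ^ n * (1/L)" using E qpoch_pp_inv_bound[OF q] L_def by (intro mult_mono) auto
      finally show "norm (E n / qpoch q q n) \<le> 1/L * norm q ^ n" by simp
    qed (use q in auto)
  qed
  have "T = S" using has_sum_unique[OF T4 S4] .
  then show ?thesis using T unfolding f_def by simp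
qed

lemma qpoch_inf_zero: "qpoch_inf 0 (0::complex) = 1"
  by (simp add: qpoch_inf_def)

lemma RR1_all:
  fixes q :: complex assumes q: "norm q < 1"
  shows "(\<lambda>n. q^(n^2) / qpoch q q n) sums (1 / (qpoch_inf q (q^5) * qpoch_inf (q^4) (q^5)))"
proof (cases "q = 0")
  case True
  have "(\<lambda>n. q^(n^2) / qpoch q q n) = (\<lambda>n. if n = 0 then 1 else 0)"
    using True by (auto simp: qpoch_def)
  then show ?thesis using True sums_single[of 0 "\<lambda>_. 1::complex"] by (simp add: qpoch_inf_zero)
next
  case False then show ?thesis using RR1[OF q] by simp
qed

lemma RR2_all:
  fixes q :: complex assumes q: "norm q < 1"
  shows "(\<lambda>n. q^(n^2+n) / qpoch q q n) sums (1 / (qpoch_inf (q^2) (q^5) * qpoch_inf (q^3) (q^5)))"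
proof (cases "q = 0")
  case True
  have "(\<lambda>n. q^(n^2+n) / qpoch q q n) = (\<lambda>n. if n = 0 then 1 else 0)"
    using True by (auto simp: qpoch_def)
  then show ?thesis using True sums_single[of 0 "\<lambda>_. 1::complex"] by (simp add: qpoch_inf_zero)
next
  case False then show ?thesis using RR2[OF q] by simp
qed

lemma exp1: "i * (3 * i - 1) div 2 + 4 * i * j + 4 * j ^ 2 = (i + 2*j)^2 + tri i"
proof -
  have ev: "even (i * (3 * i - 1))" by auto
  have A: "2 * (i * (3 * i - 1) div 2) = i * (3 * i - 1)" using ev by simp
  have ev2: "even (i * (i - 1))" by auto
  have B: "2 * tri i = i * (i - 1)" unfolding tri_def using ev2 by simp
  have a: "i * (3 * i - 1) = 2 * i^2 + i * (i - 1)"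
    by (cases i) (auto simp: power2_eq_square algebra_simps)
  have "i * (3 * i - 1) div 2 = i^2 + tri i" using A a B by linarith
  then show ?thesis by (simp add: power2_eq_square algebra_simps)
qed

lemma exp2: "i * (3 * i + 1) div 2 + 4 * i * j + 4 * j ^ 2 + 2 * j = ((i + 2*j)^2 + (i + 2*j)) + tri i"
proof -
  have ev: "even (i * (3 * i + 1))" by auto
  have A: "2 * (i * (3 * i + 1) div 2) = i * (3 * i + 1)" using ev by simp
  have ev2: "even (i * (i - 1))" by auto
  have B: "2 * tri i = i * (i - 1)" unfolding tri_def using ev2 by simp
  have a: "i * (3 * i + 1) = 2 * i^2 + 2 * i + i * (i - 1)"
    by (cases i) (auto simp: power2_eq_square algebra_simps)
  have "i * (3 * i + 1) div 2 = i^2 + i + tri i" using A a B by linarith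
  then show ?thesis by (simp add: power2_eq_square algebra_simps)
qed

theorem theorem3p4:
  fixes q :: complex
  assumes "norm q < 1"
  shows "((\<lambda>(i::nat, j::nat). q ^ (i * (3 * i - 1) div 2 + 4 * i * j + 4 * j ^ 2)
            / (qpoch q q i * qpoch (q ^ 2) (q ^ 2) j))
          has_sum (1 / (qpoch_inf q (q ^ 5) * qpoch_inf (q ^ 4) (q ^ 5)))) UNIV \<and>
         ((\<lambda>(i::nat, j::nat). q ^ (i * (3 * i + 1) div 2 + 4 * i * j + 4 * j ^ 2 + 2 * j)
            / (qpoch q q i * qpoch (q ^ 2) (q ^ 2) j))
          has_sum (1 / (qpoch_inf (q ^ 2) (q ^ 5) * qpoch_inf (q ^ 3) (q ^ 5)))) UNIV"
proof
  have q: "norm q < 1" by (rule assms)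
  have f1: "(\<lambda>(i::nat, j::nat). q ^ (i * (3 * i - 1) div 2 + 4 * i * j + 4 * j ^ 2)
            / (qpoch q q i * qpoch (q ^ 2) (q ^ 2) j)) =
        (\<lambda>(i,j). q^((i + 2*j)^2) * (q^tri i / (qpoch q q i * qpoch (q^2) (q^2) j)))"
    unfolding exp1 power_add by simp
  have E1: "norm (q^(n^2)) \<le> norm q ^ n" for n
    using qn_le[OF q, of n] by (simp add: norm_power)
  show "((\<lambda>(i::nat, j::nat). q ^ (i * (3 * i - 1) div 2 + 4 * i * j + 4 * j ^ 2)
            / (qpoch q q i * qpoch (q ^ 2) (q ^ 2) j))
          has_sum (1 / (qpoch_inf q (q ^ 5) * qpoch_inf (q ^ 4) (q ^ 5)))) UNIV"
    unfolding f1 by (rule rearr[OF q E1 RR1_all[OF q]])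
  have f2: "(\<lambda>(i::nat, j::nat). q ^ (i * (3 * i + 1) div 2 + 4 * i * j + 4 * j ^ 2 + 2 * j)
            / (qpoch q q i * qpoch (q ^ 2) (q ^ 2) j)) =
        (\<lambda>(i,j). q^((i + 2*j)^2 + (i + 2*j)) * (q^tri i / (qpoch q q i * qpoch (q^2) (q^2) j)))"
    unfolding exp2 power_add by simp
  have E2: "norm (q^(n^2 + n)) \<le> norm q ^ n" for n
  proof -
    have "norm (q^(n^2 + n)) = norm q ^ (n^2 + n)" by (simp add: norm_power)
    also have "\<dots> \<le> norm q ^ n" using q by (intro power_decreasing) auto
    finally show ?thesis .
  qed
  show "((\<lambda>(i::nat, j::nat). q ^ (i * (3 * i + 1) div 2 + 4 * i * j + 4 * j ^ 2 + 2 * j)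
            / (qpoch q q i * qpoch (q ^ 2) (q ^ 2) j))
          has_sum (1 / (qpoch_inf (q ^ 2) (q ^ 5) * qpoch_inf (q ^ 3) (q ^ 5)))) UNIV"
    unfolding f2 by (rule rearr[OF q E2 RR2_all[OF q]])
qed

end
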